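(* Let $0<b<c<1$. The safe $c$-capacity for $\mathrm{Indep}_b$ equals \[ \frac{-b\log(1-c)+c\log(1-b)}{c}. \]
   Context: All logarithms are base $2$. Collaborating cryptogenography protocol: there are $n$ players $\mathrm{plr}_1,\dots,\mathrm{plr}_n$; a secret $X$ (finitely supported) and indicators $L_1,\dots,L_n\in\{0,1\}$ ($L_i=1$ means $\mathrm{plr}_i$ knows $X$) have a joint distribution. A protocol $\pi$ specifies, for every possible partial transcript $t^k=(t_1,\dots,t_k)$ (the tuple of the first $k$ messages): whether communication stops; if not, which player $\mathrm{plr}_i$ sends the next message; and probability distributions $p_?$ and $(p_x)_{x}$ on a finite message set (depending on $t^k$). $\mathrm{plr}_i$ draws the next message, with fresh independent randomness, from $p_?$ if $L_i=0$ and from $p_x$ if $L_i=1$ and $X=x$. There is a number $\mathrm{length}(\pi)$ such that the protocol always stops after at most that many messages. $T$ denotes the random full transcript. Risky/safe protocols: for $L=(L_1,\dots,L_n)$ a random vector in $\{0,1\}^n$, a risky $(n,h,L,c,\epsilon)$-protocol is a collaborating cryptogenography protocol together with a function $D$ from transcripts to $\mathcal X=\{1,\dots,2^{\lceil h\rceil}\}$ such that, when $X$ is uniform on $\mathcal X$ and independent of $L$, for every $x\in\mathcal X$, with probability at least $1-\epsilon$ a transcript $t$ drawn from $T$ conditioned on $X=x$ satisfies both $\Pr(L_i=1\mid T=t,X=x)\le c$ for all $i$, and $D(t)=x$. A safe $(n,h,L,c,\epsilon)$-protocol is a risky one that additionally satisfies $\Pr(L_i=1\mid T=t,X=x)\le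 c$ for all $i,t,x$ with $\Pr(T=t,X=x)>0$. $\mathrm{Indep}_b(n)$ is the random vector $(L_1,\dots,L_n)$ of independent $\{0,1\}$-variables with $\Pr(L_i=1)=b$. A rate $R$ is safely (resp. riskily) $c$-achievable for $\mathrm{Indep}_b$ if for all $\epsilon>0$ and all $n_0$ there is a safe (resp. risky) $(n,nR,\mathrm{Indep}_b(n),c,\epsilon)$-protocol with $n\ge n_0$. The safe (resp. risky) $c$-capacity for $\mathrm{Indep}_b$ is the supremum of all safely (resp. riskily) $c$-achievable rates. *)

theory Defs
  imports "HOL-Probability.Probability"
begin

text \<open>The set of players
 who know the secret is represented by a set S of player indices
 (L_i = 1 iff i in S).\<close>

record protocol =
  stops   :: "nat list \<Rightarrow> bool"
  speaker :: "nat list \<Rightarrow> nat"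
  p_unk   :: "nat list \<Rightarrow> nat pmf"         \<comment> \<open>distribution p_? of a player not knowing X\<close>
  p_know  :: "nat list \<Rightarrow> nat \<Rightarrow> nat pmf"  \<comment> \<open>distribution p_x of a player knowing X = x\<close>
  plength :: nat

definition valid_protocol :: "nat \<Rightarrow> protocol \<Rightarrow> bool" where
  "valid_protocol n P \<longleftrightarrow>
     (\<forall>t. plength P \<le> length t \<longrightarrow> stops P t) \<and>
     (\<forall>t. speaker P t < n) \<and>
     (\<forall>t. finite (set_pmf (p_unk P t))) \<and>
     (\<forall>t x. finite (set_pmf (p_know P t x)))"

fun run :: "protocol \<Rightarrow> nat \<Rightarrow> nat set \<Rightarrow> nat \<Rightarrow> nat list \<Rightarrow> nat list pmf" where
  "run P x S 0 t = return_pmf t"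
| "run P x S (Suc k) t =
     (if stops P t then return_pmf t
      else bind_pmf (if speaker P t \<in> S then p_know P t x else p_unk P t)
                    (\<lambda>m. run P x S k (t @ [m])))"

text \<open>Distribution of the full transcript T given X = x and L = S.\<close>
definition transcript :: "protocol \<Rightarrow> nat \<Rightarrow> nat set \<Rightarrow> nat list pmf" where
  "transcript P x S = run P x S (plength P) []"

text \<open>Pr(L = S) for L = Indep_b(n).\<close>
definition indep_weight :: "nat \<Rightarrow> real \<Rightarrow> nat set \<Rightarrow> real" where
  "indep_weight n b S = b ^ card S * (1 - b) ^ (n - card S)"

definition secret_set :: "real \<Rightarrow> nat set" where
  "secret_set h = {1 .. 2 ^ nat \<lceil>h\<rceil>}"

text \<open>Pr(T = t | X = x) (X independent of L).\<close>
definition trans_prob :: "nat \<Rightarrow> real \<Rightarrow> protocol \<Rightarrow> nat \<Rightarrow> nat list \<Rightarrow> real" where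
  "trans_prob n b P x t = (\<Sum>S\<in>Pow {..<n}. indep_weight n b S * pmf (transcript P x S) t)"

text \<open>Pr(L_i = 1 | T = t, X = x).\<close>
definition posterior :: "nat \<Rightarrow> real \<Rightarrow> protocol \<Rightarrow> nat \<Rightarrow> nat list \<Rightarrow> nat \<Rightarrow> real" where
  "posterior n b P x t i =
     (\<Sum>S\<in>{S\<in>Pow {..<n}. i \<in> S}. indep_weight n b S * pmf (transcript P x S) t)
       / trans_prob n b P x t"

text \<open>Probability, conditioned on X = x, that the transcript satisfies Q.\<close>
definition cond_prob :: "nat \<Rightarrow> real \<Rightarrow> protocol \<Rightarrow> nat \<Rightarrow> (nat list \<Rightarrow> bool) \<Rightarrow> real" where
  "cond_prob n b P x Q =
     (\<Sum>S\<in>Pow {..<n}. indep_weight n b S * measure_pmf.prob (transcript P x S) {t. Q t})"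

definition risky_protocol ::
  "nat \<Rightarrow> real \<Rightarrow> real \<Rightarrow> real \<Rightarrow> real \<Rightarrow> protocol \<Rightarrow> (nat list \<Rightarrow> nat) \<Rightarrow> bool" where
  "risky_protocol n h b c \<epsilon> P D \<longleftrightarrow>
     valid_protocol n P \<and>
     (\<forall>t. D t \<in> secret_set h) \<and>
     (\<forall>x\<in>secret_set h.
        cond_prob n b P x (\<lambda>t. (\<forall>i<n. posterior n b P x t i \<le> c) \<and> D t = x) \<ge> 1 - \<epsilon>)"

definition safe_protocol ::
  "nat \<Rightarrow> real \<Rightarrow> real \<Rightarrow> real \<Rightarrow> real \<Rightarrow> protocol \<Rightarrow> (nat list \<Rightarrow> nat) \<Rightarrow> bool" where
  "safe_protocol n h b c \<epsilon> P D \<longleftrightarrow>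
     risky_protocol n h b c \<epsilon> P D \<and>
     (\<forall>i<n. \<forall>t. \<forall>x\<in>secret_set h.
        trans_prob n b P x t > 0 \<longrightarrow> posterior n b P x t i \<le> c)"

definition safely_achievable :: "real \<Rightarrow> real \<Rightarrow> real \<Rightarrow> bool" where
  "safely_achievable b c R \<longleftrightarrow>
     (\<forall>\<epsilon>>0. \<forall>n0. \<exists>n\<ge>n0. \<exists>P D. safe_protocol n (real n * R) b c \<epsilon> P D)"

definition safe_capacity :: "real \<Rightarrow> real \<Rightarrow> real" where
  "safe_capacity b c = Sup {R. safely_achievable b c R}"

end

theory Submission
  imports Defs "HOL-Library.FuncSet"
begin


definition dstep :: "protocol \<Rightarrow> nat \<Rightarrow> nat set \<Rightarrow> nat list \<Rightarrow> nat pmf" where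
  "dstep P x S s = (if speaker P s \<in> S then p_know P s x else p_unk P s)"

definition okr :: "protocol \<Rightarrow> nat \<Rightarrow> nat list \<Rightarrow> nat list \<Rightarrow> bool" where
  "okr P k t0 ys \<longleftrightarrow> length ys \<le> k \<and> (\<forall>j<length ys. \<not> stops P (t0 @ take j ys))
      \<and> (length ys < k \<longrightarrow> stops P (t0 @ ys))"

lemma run_support_prefix: "t \<in> set_pmf (run P x S k t0) \<Longrightarrow> \<exists>ys. t = t0 @ ys"
proof (induction k arbitrary: t0 t)
  case 0 then show ?case by auto
next
  case (Suc k)
  show ?case
  proof (cases "stops P t0")
    case True then show ?thesis using Suc.prems by auto
  next
    case False
    with Suc.prems obtain m where "t \<in> set_pmf (run P x S k (t0 @ [m]))"
      by (auto split: if_splits)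
    from Suc.IH[OF this] show ?thesis by auto
  qed
qed

lemma pmf_run_nonprefix: "\<not> (\<exists>ys. t = t0 @ ys) \<Longrightarrow> pmf (run P x S k t0) t = 0"
  using run_support_prefix[of t P x S k t0] by (auto simp: set_pmf_iff)

lemma integral_pmf_point:
  fixes g :: "nat \<Rightarrow> real"
  assumes "\<And>m. m \<noteq> y \<Longrightarrow> g m = 0"
  shows "measure_pmf.expectation M g = pmf M y * g y"
proof -
  have "g = (\<lambda>m. g y * indicator {y} m)" using assms by (auto simp: indicator_def fun_eq_iff)
  then have "measure_pmf.expectation M g = measure_pmf.expectation M (\<lambda>m. g y * indicator {y} m)" by simp
  also have "\<dots> = g y * measure_pmf.prob M {y}" by simp
  finally show ?thesis by (simp add: measure_pmf_single)
qed

lemma pmf_run: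
  "pmf (run P x S k t0) (t0 @ ys) =
     (if okr P k t0 ys then (\<Prod>j<length ys. pmf (dstep P x S (t0 @ take j ys)) (ys ! j)) else 0)"
proof (induction k arbitrary: t0 ys)
  case 0
  then show ?case by (cases ys) (auto simp: okr_def)
next
  case (Suc k)
  show ?case
  proof (cases "stops P t0")
    case True
    then show ?thesis by (cases ys) (auto simp: okr_def)
  next
    case False
    show ?thesis
    proof (cases ys)
      case Nil
      have "pmf (run P x S (Suc k) t0) t0 = 0"
      proof -
        have "pmf (run P x S (Suc k) t0) t0 =
          measure_pmf.expectation (dstep P x S t0) (\<lambda>m. pmf (run P x S k (t0 @ [m])) t0)"
          using False by (simp add: pmf_bind dstep_def)
        also have "\<dots> = 0"
          by (subst pmf_run_nonprefix) auto
        finally show ?thesis .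
      qed
      then show ?thesis using Nil False by (auto simp: okr_def)
    next
      case (Cons y ys')
      have "pmf (run P x S (Suc k) t0) (t0 @ ys) =
          measure_pmf.expectation (dstep P x S t0) (\<lambda>m. pmf (run P x S k (t0 @ [m])) (t0 @ ys))"
        using False by (simp add: pmf_bind dstep_def)
      also have "\<dots> = pmf (dstep P x S t0) y * pmf (run P x S k (t0 @ [y])) (t0 @ ys)"
        by (rule integral_pmf_point) (auto simp: Cons intro!: pmf_run_nonprefix)
      also have "pmf (run P x S k (t0 @ [y])) (t0 @ ys) = pmf (run P x S k (t0 @ [y])) ((t0 @ [y]) @ ys')"
        using Cons by simp
      also have "\<dots> = (if okr P k (t0 @ [y]) ys' then (\<Prod>j<length ys'. pmf (dstep P x S ((t0 @ [y]) @ take j ys')) (ys' ! j)) else 0)"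
        by (rule Suc.IH)
      finally have e: "pmf (run P x S (Suc k) t0) (t0 @ ys) = pmf (dstep P x S t0) y * (if okr P k (t0 @ [y]) ys' then (\<Prod>j<length ys'. pmf (dstep P x S ((t0 @ [y]) @ take j ys')) (ys' ! j)) else 0)" .
      have ok: "okr P (Suc k) t0 ys \<longleftrightarrow> okr P k (t0 @ [y]) ys'"
      proof -
        have "(\<forall>j<length ys. \<not> stops P (t0 @ take j ys)) \<longleftrightarrow> (\<forall>j<length ys'. \<not> stops P ((t0 @ [y]) @ take j ys'))"
          using False unfolding Cons by (auto simp: less_Suc_eq_0_disj)
        then show ?thesis unfolding okr_def using Cons by auto
      qed
      have pr: "(\<Prod>j<length ys. pmf (dstep P x S (t0 @ take j ys)) (ys ! j)) =
        pmf (dstep P x S t0) y * (\<Prod>j<length ys'. pmf (dstep P x S ((t0 @ [y]) @ take j ys')) (ys' ! j))"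
      proof -
        have "(\<Prod>j<length ys. pmf (dstep P x S (t0 @ take j ys)) (ys ! j)) =
           pmf (dstep P x S (t0 @ take 0 ys)) (ys ! 0) * (\<Prod>j<length ys'. pmf (dstep P x S (t0 @ take (Suc j) ys)) (ys ! Suc j))"
        proof -
          have L: "length ys = Suc (length ys')" using Cons by simp
          show ?thesis unfolding L by (rule prod.lessThan_Suc_shift)
        qed
        then show ?thesis using Cons by simp
      qed
      show ?thesis using e ok pr by simp
    qed
  qed
qed

lemma pmf_transcript:
  "pmf (transcript P x S) t =
     (if okr P (plength P) [] t then (\<Prod>j<length t. pmf (dstep P x S (take j t)) (t ! j)) else 0)"
  using pmf_run[of P x S "plength P" "[]" t] by (simp add: transcript_def)

lemma run_empty_indep: "run P x {} k t = run P y {} k t"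
  by (induction k arbitrary: t) auto

lemma transcript_empty_indep: "transcript P x {} = transcript P y {}"
  by (simp add: transcript_def run_empty_indep)

lemma finite_run_support:
  assumes "valid_protocol n P"
  shows "finite (set_pmf (run P x S k t))"
proof (induction k arbitrary: t)
  case 0 then show ?case by simp
next
  case (Suc k)
  have f1: "finite (set_pmf (p_know P t x))" "finite (set_pmf (p_unk P t))"
    using assms by (auto simp: valid_protocol_def)
  show ?case using Suc f1 by (auto simp: set_bind_pmf)
qed


definition Cf :: "protocol \<Rightarrow> nat list \<Rightarrow> real" where
  "Cf P t = (if okr P (plength P) [] t then 1 else 0)"

definition Ff :: "protocol \<Rightarrow> nat \<Rightarrow> nat list \<Rightarrow> nat \<Rightarrow> bool \<Rightarrow> real" where
  "Ff P x t i v = (\<Prod>j\<in>{j. j < length t \<and> speaker P (take j t) = i}.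
      pmf (if v then p_know P (take j t) x else p_unk P (take j t)) (t ! j))"

lemma transcript_factor:
  assumes "valid_protocol n P"
  shows "pmf (transcript P x S) t = Cf P t * (\<Prod>i<n. Ff P x t i (i \<in> S))"
proof -
  have sp: "(\<lambda>j. speaker P (take j t)) ` {..<length t} \<subseteq> {..<n}" using assms by (auto simp: valid_protocol_def)
  have "(\<Prod>j<length t. pmf (dstep P x S (take j t)) (t ! j)) =
      (\<Prod>i<n. \<Prod>j\<in>{j\<in>{..<length t}. speaker P (take j t) = i}. pmf (dstep P x S (take j t)) (t ! j))"
    by (rule prod.group[symmetric]) (use sp in auto)
  also have "\<dots> = (\<Prod>i<n. Ff P x t i (i \<in> S))"
    unfolding Ff_def by (intro prod.cong refl) (auto simp: dstep_def)
  finally show ?thesis by (simp add: pmf_transcript Cf_def)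
qed

lemma indep_weight_prod:
  assumes "S \<subseteq> {..<n}"
  shows "indep_weight n b S = (\<Prod>i<n. if i \<in> S then b else 1 - b)"
proof -
  have fin: "finite S" using assms finite_subset by blast
  have "(\<Prod>i<n. if i \<in> S then b else 1 - b) = (\<Prod>i\<in>S. b) * (\<Prod>i\<in>{..<n} - S. 1 - b)"
    using prod.If_cases[of "{..<n}" "\<lambda>i. i \<in> S" "\<lambda>_. b" "\<lambda>_. 1 - b"] assms
    by (simp add: Int_absorb1 Diff_eq[symmetric] Collect_mem_eq)
  also have "\<dots> = b ^ card S * (1 - b) ^ (n - card S)"
    using assms fin by (simp add: card_Diff_subset)
  finally show ?thesis by (simp add: indep_weight_def)
qed

lemma sum_pow_prod:
  fixes f g :: "'a \<Rightarrow> real"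
  assumes "finite A"
  shows "(\<Sum>S\<in>Pow A. \<Prod>i\<in>A. if i \<in> S then f i else g i) = (\<Prod>i\<in>A. f i + g i)"
proof -
  have "\<And>S. S \<in> Pow A \<Longrightarrow> (\<Prod>i\<in>A. if i \<in> S then f i else g i) = (\<Prod>i\<in>S. f i) * (\<Prod>i\<in>A - S. g i)"
  proof -
    fix S assume "S \<in> Pow A"
    then have "A \<inter> S = S" by auto
    then show "(\<Prod>i\<in>A. if i \<in> S then f i else g i) = (\<Prod>i\<in>S. f i) * (\<Prod>i\<in>A - S. g i)"
      using prod.If_cases[of A "\<lambda>i. i \<in> S" f g] assms by (simp add: Diff_eq)
  qed
  then show ?thesis using prod_add[OF assms, of f g] by simp
qed

lemma weight_times_prod:
  assumes "S \<subseteq> {..<n}"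
  shows "indep_weight n b S * (C * (\<Prod>i<n. F i (i \<in> S))) =
    C * (\<Prod>i<n. if i \<in> S then b * F i True else (1 - b) * F i False)"
proof -
  have "(\<Prod>i<n. if i \<in> S then b else 1 - b) * (\<Prod>i<n. F i (i \<in> S)) =
    (\<Prod>i<n. (if i \<in> S then b else 1 - b) * F i (i \<in> S))"
    by (simp add: prod.distrib)
  also have "\<dots> = (\<Prod>i<n. if i \<in> S then b * F i True else (1 - b) * F i False)"
    by (intro prod.cong) auto
  finally show ?thesis by (simp add: indep_weight_prod[OF assms] mult.left_commute)
qed

lemma trans_prob_factor:
  assumes "\<And>S. pmf (transcript P x S) t = C * (\<Prod>i<n. F i (i \<in> S))"
  shows "trans_prob n b P x t = C * (\<Prod>i<n. b * F i True + (1 - b) * F i False)"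
proof -
  have "trans_prob n b P x t = (\<Sum>S\<in>Pow {..<n}. C * (\<Prod>i<n. if i \<in> S then b * F i True else (1 - b) * F i False))"
    unfolding trans_prob_def assms by (intro sum.cong refl weight_times_prod) auto
  also have "\<dots> = C * (\<Prod>i<n. b * F i True + (1 - b) * F i False)"
    by (simp add: sum_distrib_left[symmetric] sum_pow_prod)
  finally show ?thesis .
qed

lemma frac_cancel:
  fixes C Q a d :: real
  assumes "C \<noteq> 0" "Q \<noteq> 0"
  shows "C * (a * Q) / (C * (d * Q)) = a / d"
  using assms by simp

lemma posterior_factor:
  assumes "\<And>S. pmf (transcript P x S) t = C * (\<Prod>i<n. F i (i \<in> S))" and "i < n"
  shows "posterior n b P x t i =
    (if C * (\<Prod>j<n. b * F j True + (1 - b) * F j False) = 0 then 0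
     else b * F i True / (b * F i True + (1 - b) * F i False))"
proof -
  define f where "f j = b * F j True" for j
  define g where "g j = (1 - b) * F j False" for j
  define g' where "g' = g(i := 0)"
  have num: "(\<Sum>S\<in>{S\<in>Pow {..<n}. i \<in> S}. indep_weight n b S * pmf (transcript P x S) t)
      = C * (\<Prod>j<n. f j + g' j)"
  proof -
    have "(\<Sum>S\<in>{S\<in>Pow {..<n}. i \<in> S}. indep_weight n b S * pmf (transcript P x S) t)
       = (\<Sum>S\<in>Pow {..<n}. if i \<in> S then indep_weight n b S * pmf (transcript P x S) t else 0)"
      by (subst sum.inter_filter) auto
    also have "\<dots> = (\<Sum>S\<in>Pow {..<n}. C * (\<Prod>j<n. if j \<in> S then f j else g' j))"
    proof (intro sum.cong refl)
      fix S assume S: "S \<in> Pow {..<n}"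
      show "(if i \<in> S then indep_weight n b S * pmf (transcript P x S) t else 0) =
            C * (\<Prod>j<n. if j \<in> S then f j else g' j)"
      proof (cases "i \<in> S")
        case True
        then show ?thesis unfolding assms using weight_times_prod[of S n b C F] S
          by (auto simp: f_def g_def g'_def intro!: prod.cong)
      next
        case False
        have "(\<Prod>j<n. if j \<in> S then f j else g' j) = 0"
          using False assms(2) by (intro prod_zero) (auto simp: g'_def intro!: bexI[of _ i])
        then show ?thesis using False by simp
      qed
    qed
    also have "\<dots> = C * (\<Prod>j<n. f j + g' j)"
      by (simp add: sum_distrib_left[symmetric] sum_pow_prod)
    finally show ?thesis .
  qed
  have split: "\<And>h. (\<Prod>j<n. h j) = h i * (\<Prod>j\<in>{..<n} - {i}. h j)"
    using assms(2) by (metis finite_lessThan lessThan_iff prod.remove)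
  have tp: "trans_prob n b P x t = C * (\<Prod>j<n. f j + g j)"
    using trans_prob_factor[OF assms(1)] by (simp add: f_def g_def)
  have e2: "(\<Prod>j\<in>{..<n} - {i}. f j + g' j) = (\<Prod>j\<in>{..<n} - {i}. f j + g j)"
    by (intro prod.cong) (auto simp: g'_def)
  show ?thesis
  proof (cases "C * (\<Prod>j<n. f j + g j) = 0")
    case True
    then show ?thesis unfolding posterior_def tp by (simp add: f_def g_def)
  next
    case False
    then have nz: "f i + g i \<noteq> 0" "C \<noteq> 0" "(\<Prod>j\<in>{..<n} - {i}. f j + g j) \<noteq> 0"
      using split[of "\<lambda>j. f j + g j"] by auto
    have "posterior n b P x t i = C * (f i * (\<Prod>j\<in>{..<n} - {i}. f j + g j)) / (C * ((f i + g i) * (\<Prod>j\<in>{..<n} - {i}. f j + g j)))"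
      unfolding posterior_def num tp using split[of "\<lambda>j. f j + g' j"] split[of "\<lambda>j. f j + g j"] e2
      by (simp add: g'_def)
    also have "\<dots> = f i / (f i + g i)" by (rule frac_cancel[OF nz(2) nz(3)])
    finally show ?thesis using False by (simp add: f_def g_def)
  qed
qed


lemma trans_prob_nonneg:
  assumes "0 \<le> b" "b \<le> 1"
  shows "0 \<le> trans_prob n b P x t"
  unfolding trans_prob_def indep_weight_def using assms by (intro sum_nonneg mult_nonneg_nonneg) auto

lemma cond_prob_sum:
  assumes "finite U" "\<And>S. S \<subseteq> {..<n} \<Longrightarrow> set_pmf (transcript P x S) \<subseteq> U"
  shows "cond_prob n b P x Q = (\<Sum>t\<in>{t\<in>U. Q t}. trans_prob n b P x t)"
proof -
  have "\<And>S. S \<subseteq> {..<n} \<Longrightarrow> measure_pmf.prob (transcript P x S) {t. Q t} = (\<Sum>t\<in>{t\<in>U. Q t}. pmf (transcript P x S) t)"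
  proof -
    fix S assume S: "S \<subseteq> {..<n}"
    have "measure_pmf.prob (transcript P x S) {t. Q t} = measure_pmf.prob (transcript P x S) ({t. Q t} \<inter> set_pmf (transcript P x S))"
      by (simp add: measure_Int_set_pmf)
    also have "{t. Q t} \<inter> set_pmf (transcript P x S) = {t\<in>U. Q t} \<inter> set_pmf (transcript P x S)"
      using assms(2)[OF S] by auto
    also have "measure_pmf.prob (transcript P x S) \<dots> = measure_pmf.prob (transcript P x S) {t\<in>U. Q t}"
      by (simp add: measure_Int_set_pmf)
    also have "\<dots> = (\<Sum>t\<in>{t\<in>U. Q t}. pmf (transcript P x S) t)"
      using assms(1) by (simp add: measure_measure_pmf_finite)
    finally show "?thesis S" .
  qed
  then have "cond_prob n b P x Q = (\<Sum>S\<in>Pow {..<n}. \<Sum>t\<in>{t\<in>U. Q t}. indep_weight n b S * pmf (transcript P x S) t)"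
    unfolding cond_prob_def by (auto simp: sum_distrib_left intro!: sum.cong)
  also have "\<dots> = (\<Sum>t\<in>{t\<in>U. Q t}. trans_prob n b P x t)"
    unfolding trans_prob_def by (rule sum.swap)
  finally show ?thesis .
qed

lemma exp_convex_ineq:
  fixes l u :: real
  assumes "0 \<le> l" "l \<le> 1"
  shows "exp (l * u) \<le> 1 - l + l * exp u"
  using convex_onD[where f=exp and A=UNIV and t=l and x=0 and y=u] exp_convex assms by simp

lemma psi_le_chord:
  fixes b c s p :: real
  assumes "0 < c" "c < 1" "0 \<le> p" "p \<le> c" "0 \<le> s"
  shows "exp (- s * ln (1 - p)) \<le> 1 + (p / c) * (exp (- s * ln (1 - c)) - 1)"
proof -
  define l where "l = p / c"
  have l: "0 \<le> l" "l \<le> 1" using assms by (auto simp: l_def)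
  have p: "p = l * c" using assms by (simp add: l_def)
  have "exp (l * ln (1 - c)) \<le> 1 - l + l * exp (ln (1 - c))" by (rule exp_convex_ineq[OF l])
  also have "\<dots> = 1 - p" using assms by (simp add: p algebra_simps)
  finally have "ln (exp (l * ln (1 - c))) \<le> ln (1 - p)"
    using assms by (subst ln_le_cancel_iff) auto
  then have "l * ln (1 - c) \<le> ln (1 - p)" by simp
  from mult_left_mono[OF this assms(5)]
  have "- s * ln (1 - p) \<le> l * (- s * ln (1 - c))" by (simp add: algebra_simps)
  then have "exp (- s * ln (1 - p)) \<le> exp (l * (- s * ln (1 - c)))" by simp
  also have "\<dots> \<le> 1 - l + l * exp (- s * ln (1 - c))" by (rule exp_convex_ineq[OF l])
  finally show ?thesis by (simp add: l_def algebra_simps)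
qed


lemma Ff_nonneg: "0 \<le> Ff P x t i v"
  unfolding Ff_def by (intro prod_nonneg) auto

lemma Cf_cases: "Cf P t = 0 \<or> Cf P t = 1"
  unfolding Cf_def by auto

lemma pointwise_bound:
  fixes b c s A :: real
  assumes b: "0 < b" "b < c" "c < 1" and s: "0 < s" and A: "0 < A"
    and valid: "valid_protocol n P"
    and post: "trans_prob n b P x t > 0 \<Longrightarrow> \<forall>i<n. posterior n b P x t i \<le> c"
  defines "\<mu>0 \<equiv> exp (s * ln (1 - b))"
  defines "\<mu>1 \<equiv> \<mu>0 * (1 + (exp (- s * ln (1 - c)) - 1) / c)"
  shows "trans_prob n b P x t \<le> A * pmf (transcript P x {}) t +
     exp (- s * ln A) * (Cf P t * (\<Prod>i<n. \<mu>1 * (b * Ff P x t i True) + \<mu>0 * ((1 - b) * Ff P x t i False)))"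
proof -
  define a where "a i = b * Ff P x t i True" for i
  define d where "d i = (1 - b) * Ff P x t i False" for i
  define Kc where "Kc = exp (- s * ln (1 - c))"
  have a0: "0 \<le> a i" for i using b by (auto simp: a_def Ff_nonneg)
  have d0: "0 \<le> d i" for i using b by (auto simp: d_def Ff_nonneg)
  have fac: "\<And>S. pmf (transcript P x S) t = Cf P t * (\<Prod>i<n. Ff P x t i (i \<in> S))"
    by (rule transcript_factor[OF valid])
  have Tp: "trans_prob n b P x t = Cf P t * (\<Prod>i<n. a i + d i)"
    using trans_prob_factor[OF fac] by (simp add: a_def d_def)
  have q: "pmf (transcript P x {}) t = Cf P t * (\<Prod>i<n. Ff P x t i False)"
    using fac[of "{}"] by simp
  have G0: "0 \<le> Cf P t * (\<Prod>i<n. \<mu>1 * (b * Ff P x t i True) + \<mu>0 * ((1 - b) * Ff P x t i False))"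
  proof -
    have "ln (1 - c) < 0" using b by simp
    then have "s * ln (1 - c) \<le> 0" using s by (intro mult_nonneg_nonpos) auto
    then have "0 \<le> - s * ln (1 - c)" by simp
    then have "1 \<le> Kc" unfolding Kc_def by simp
    then have "0 \<le> (Kc - 1) / c" using b by simp
    then have "0 \<le> \<mu>1" unfolding \<mu>1_def \<mu>0_def Kc_def[symmetric] by simp
    then show ?thesis using b Cf_cases[of P t]
      by (auto intro!: prod_nonneg add_nonneg_nonneg mult_nonneg_nonneg simp: \<mu>0_def Ff_nonneg)
  qed
  have q0: "0 \<le> pmf (transcript P x {}) t" by simp
  show ?thesis
  proof (cases "trans_prob n b P x t > 0")
    case False
    then have "trans_prob n b P x t \<le> 0" by simp
    moreover have "0 \<le> A * pmf (transcript P x {}) t" using A q0 by simp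
    ultimately show ?thesis using G0 by (smt (verit) exp_gt_zero mult_nonneg_nonneg)
  next
    case True
    have C1: "Cf P t = 1" using True Tp Cf_cases[of P t] by auto
    have pos: "0 < (\<Prod>i<n. a i + d i)" using True Tp C1 by simp
    have ad: "0 < a i + d i" if "i < n" for i
    proof -
      have "a i + d i \<noteq> 0" using pos that by (metis finite_lessThan lessThan_iff less_irrefl prod_zero_iff)
      then show ?thesis using a0[of i] d0[of i] by simp
    qed
    have pi: "a i / (a i + d i) \<le> c" if "i < n" for i
    proof -
      have "posterior n b P x t i \<le> c" using post[OF True] that by simp
      moreover have "posterior n b P x t i = a i / (a i + d i)"
      proof -
        have ne: "Cf P t * (\<Prod>j<n. b * Ff P x t j True + (1 - b) * Ff P x t j False) \<noteq> 0"
          using True unfolding trans_prob_factor[OF fac] by linarith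
        show ?thesis using posterior_factor[OF fac that, of b] unfolding if_not_P[OF ne] by (simp add: a_def d_def)
      qed
      ultimately show ?thesis by simp
    qed
    have dpos: "0 < d i" if "i < n" for i
    proof -
      have "a i \<le> c * (a i + d i)" using pi[OF that] ad[OF that] by (simp add: divide_le_eq)
      then have h: "a i \<le> c * a i + c * d i" by (simp add: distrib_left)
      have e: "(1 - c) * (a i + d i) = a i + d i - c * a i - c * d i" by (simp add: algebra_simps)
      have "0 < (1 - c) * (a i + d i)" using ad[OF that] b by simp
      then show ?thesis using h e by linarith
    qed
    define p where "p i = a i / (a i + d i)" for i
    have p: "0 \<le> p i" "p i \<le> c" if "i < n" for i
      using a0[of i] ad[OF that] pi[OF that] by (auto simp: p_def)
    have omp: "1 - p i = d i / (a i + d i)" if "i < n" for i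
      using ad[OF that] by (simp add: p_def field_simps)
    have qv: "pmf (transcript P x {}) t = (\<Prod>i<n. d i / (1 - b))"
      using q C1 b by (simp add: d_def)
    have qpos: "0 < pmf (transcript P x {}) t"
      unfolding qv using dpos b by (auto intro!: prod_pos)
    have Tpv: "trans_prob n b P x t = (\<Prod>i<n. a i + d i)" using Tp C1 by simp
    have lnTp: "ln (trans_prob n b P x t) = (\<Sum>i<n. ln (a i + d i))"
      unfolding Tpv using ad by (subst ln_prod) (auto dest!: ad)
    have lnq: "ln (pmf (transcript P x {}) t) = (\<Sum>i<n. ln (d i) - ln (1 - b))"
    proof -
      have "ln (\<Prod>i<n. d i / (1 - b)) = (\<Sum>i<n. ln (d i / (1 - b)))"
        using b by (subst ln_prod) (auto dest!: dpos)
      also have "\<dots> = (\<Sum>i<n. ln (d i) - ln (1 - b))"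
        using b by (intro sum.cong refl) (auto dest!: dpos simp: ln_div)
      finally show ?thesis unfolding qv .
    qed
    have lnp: "ln (1 - p i) = ln (d i) - ln (a i + d i)" if "i < n" for i
      using omp[OF that] dpos[OF that] ad[OF that] by (simp add: ln_div)
    have Geq: "Cf P t * (\<Prod>i<n. \<mu>1 * (b * Ff P x t i True) + \<mu>0 * ((1 - b) * Ff P x t i False))
        = (\<Prod>i<n. (a i + d i) * (\<mu>0 * (1 + p i * (Kc - 1) / c)))"
      unfolding C1 mult_1_left
    proof (intro prod.cong refl)
      fix i assume "i \<in> {..<n}"
      then have ne: "a i + d i \<noteq> 0" using ad by force
      have "\<mu>1 * (b * Ff P x t i True) + \<mu>0 * ((1 - b) * Ff P x t i False) = \<mu>1 * a i + \<mu>0 * d i"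
        by (simp add: a_def d_def)
      also have "\<dots> = \<mu>0 * (a i + d i) + \<mu>0 * a i * (Kc - 1) / c"
        unfolding \<mu>1_def Kc_def using b by (simp add: field_simps)
      also have "\<dots> = (a i + d i) * (\<mu>0 * (1 + p i * (Kc - 1) / c))"
      proof -
        have ap: "(a i + d i) * p i = a i" unfolding p_def using ne by simp
        have c0: "c \<noteq> 0" using b by simp
        have "(a i + d i) * (\<mu>0 * (1 + p i * (Kc - 1) / c)) = \<mu>0 * (a i + d i) + \<mu>0 * ((a i + d i) * p i) * (Kc - 1) / c"
          using c0 by (simp add: field_simps)
        then show ?thesis unfolding ap by simp
      qed
      finally show "\<mu>1 * (b * Ff P x t i True) + \<mu>0 * ((1 - b) * Ff P x t i False) = (a i + d i) * (\<mu>0 * (1 + p i * (Kc - 1) / c))" .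
    qed
    have "(\<Prod>i<n. (a i + d i) * (\<mu>0 * exp (- s * ln (1 - p i)))) \<le> (\<Prod>i<n. (a i + d i) * (\<mu>0 * (1 + p i * (Kc - 1) / c)))"
    proof (intro prod_mono conjI)
      fix i assume "i \<in> {..<n}"
      then have i: "i < n" by simp
      show "0 \<le> (a i + d i) * (\<mu>0 * exp (- s * ln (1 - p i)))" using ad[OF i] by (simp add: \<mu>0_def)
      have "exp (- s * ln (1 - p i)) \<le> 1 + (p i / c) * (Kc - 1)"
        unfolding Kc_def by (rule psi_le_chord) (use b s p[OF i] in auto)
      then show "(a i + d i) * (\<mu>0 * exp (- s * ln (1 - p i))) \<le> (a i + d i) * (\<mu>0 * (1 + p i * (Kc - 1) / c))"
        using ad[OF i] by (intro mult_left_mono) (auto simp: \<mu>0_def)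
    qed
    also have "(\<Prod>i<n. (a i + d i) * (\<mu>0 * exp (- s * ln (1 - p i)))) =
        trans_prob n b P x t * (\<Prod>i<n. exp (s * (ln (1 - b) - ln (1 - p i))))"
      unfolding Tpv prod.distrib[symmetric] by (intro prod.cong refl) (simp add: \<mu>0_def exp_add[symmetric] algebra_simps)
    also have "(\<Prod>i<n. exp (s * (ln (1 - b) - ln (1 - p i)))) = exp (s * (\<Sum>i<n. ln (1 - b) - ln (1 - p i)))"
      by (simp add: exp_sum sum_distrib_left)
    also have "(\<Sum>i<n. ln (1 - b) - ln (1 - p i)) = ln (trans_prob n b P x t) - ln (pmf (transcript P x {}) t)"
      unfolding lnTp lnq sum_subtractf[symmetric] by (intro sum.cong refl) (simp add: lnp)
    finally have key: "trans_prob n b P x t * exp (s * (ln (trans_prob n b P x t) - ln (pmf (transcript P x {}) t)))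
       \<le> Cf P t * (\<Prod>i<n. \<mu>1 * (b * Ff P x t i True) + \<mu>0 * ((1 - b) * Ff P x t i False))"
      using Geq by simp
    show ?thesis
    proof (cases "trans_prob n b P x t \<le> A * pmf (transcript P x {}) t")
      case True
      then show ?thesis using G0 by (smt (verit) exp_gt_zero mult_nonneg_nonneg)
    next
      case False
      then have "ln (A * pmf (transcript P x {}) t) < ln (trans_prob n b P x t)"
        using mult_pos_pos[OF A qpos] by (subst ln_less_cancel_iff) auto
      then have "ln A + ln (pmf (transcript P x {}) t) < ln (trans_prob n b P x t)"
        using A qpos by (simp add: ln_mult)
      then have "1 \<le> exp (- s * ln A) * exp (s * (ln (trans_prob n b P x t) - ln (pmf (transcript P x {}) t)))"
      proof -
        have "s * (ln A + ln (pmf (transcript P x {}) t)) \<le> s * ln (trans_prob n b P x t)"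
          using s \<open>ln A + ln (pmf (transcript P x {}) t) < ln (trans_prob n b P x t)\<close>
          by (intro mult_left_mono) auto
        then show ?thesis by (simp add: exp_add[symmetric] algebra_simps)
      qed
      then have "trans_prob n b P x t \<le> trans_prob n b P x t * (exp (- s * ln A) * exp (s * (ln (trans_prob n b P x t) - ln (pmf (transcript P x {}) t))))"
        using True by simp
      also have "\<dots> \<le> exp (- s * ln A) * (Cf P t * (\<Prod>i<n. \<mu>1 * (b * Ff P x t i True) + \<mu>0 * ((1 - b) * Ff P x t i False)))"
        using key by (simp add: algebra_simps mult_left_mono)
      finally show ?thesis using A q0 by (smt (verit) mult_nonneg_nonneg)
    qed
  qed
qed


lemma sum_G:
  fixes \<mu>0 \<mu>1 b :: real
  assumes valid: "valid_protocol n P" and U: "finite U" "\<And>S. S \<subseteq> {..<n} \<Longrightarrow> set_pmf (transcript P x S) \<subseteq> U"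
  shows "(\<Sum>t\<in>U. Cf P t * (\<Prod>i<n. \<mu>1 * (b * Ff P x t i True) + \<mu>0 * ((1 - b) * Ff P x t i False)))
     = (\<mu>1 * b + \<mu>0 * (1 - b)) ^ n"
proof -
  define co where "co S = (\<Prod>i<n. if i \<in> S then \<mu>1 else \<mu>0)" for S :: "nat set"
  have fac: "\<And>S. pmf (transcript P x S) t = Cf P t * (\<Prod>i<n. Ff P x t i (i \<in> S))" for t
    by (rule transcript_factor[OF valid])
  have pt: "Cf P t * (\<Prod>i<n. \<mu>1 * (b * Ff P x t i True) + \<mu>0 * ((1 - b) * Ff P x t i False))
      = (\<Sum>S\<in>Pow {..<n}. co S * (indep_weight n b S * pmf (transcript P x S) t))" for t
  proof -
    have "(\<Sum>S\<in>Pow {..<n}. co S * (indep_weight n b S * pmf (transcript P x S) t)) =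
       (\<Sum>S\<in>Pow {..<n}. Cf P t * (\<Prod>i<n. if i \<in> S then \<mu>1 * (b * Ff P x t i True) else \<mu>0 * ((1 - b) * Ff P x t i False)))"
    proof (intro sum.cong refl)
      fix S assume S: "S \<in> Pow {..<n}"
      have "co S * (indep_weight n b S * pmf (transcript P x S) t) =
         co S * (Cf P t * (\<Prod>i<n. if i \<in> S then b * Ff P x t i True else (1 - b) * Ff P x t i False))"
        unfolding fac using weight_times_prod[of S n b "Cf P t" "Ff P x t"] S by simp
      also have "\<dots> = Cf P t * ((\<Prod>i<n. if i \<in> S then \<mu>1 else \<mu>0) * (\<Prod>i<n. if i \<in> S then b * Ff P x t i True else (1 - b) * Ff P x t i False))"
        by (simp add: co_def)
      also have "(\<Prod>i<n. if i \<in> S then \<mu>1 else \<mu>0) * (\<Prod>i<n. if i \<in> S then b * Ff P x t i True else (1 - b) * Ff P x t i False)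
          = (\<Prod>i<n. if i \<in> S then \<mu>1 * (b * Ff P x t i True) else \<mu>0 * ((1 - b) * Ff P x t i False))"
        by (subst prod.distrib[symmetric]) (intro prod.cong, auto)
      finally show "co S * (indep_weight n b S * pmf (transcript P x S) t) =
         Cf P t * (\<Prod>i<n. if i \<in> S then \<mu>1 * (b * Ff P x t i True) else \<mu>0 * ((1 - b) * Ff P x t i False))" .
    qed
    also have "\<dots> = Cf P t * (\<Prod>i<n. \<mu>1 * (b * Ff P x t i True) + \<mu>0 * ((1 - b) * Ff P x t i False))"
      by (simp add: sum_distrib_left[symmetric] sum_pow_prod)
    finally show ?thesis by simp
  qed
  have "(\<Sum>t\<in>U. Cf P t * (\<Prod>i<n. \<mu>1 * (b * Ff P x t i True) + \<mu>0 * ((1 - b) * Ff P x t i False)))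
     = (\<Sum>t\<in>U. \<Sum>S\<in>Pow {..<n}. co S * (indep_weight n b S * pmf (transcript P x S) t))"
    by (simp add: pt)
  also have "\<dots> = (\<Sum>S\<in>Pow {..<n}. co S * indep_weight n b S * (\<Sum>t\<in>U. pmf (transcript P x S) t))"
    by (subst sum.swap) (simp add: sum_distrib_left mult.assoc)
  also have "\<dots> = (\<Sum>S\<in>Pow {..<n}. co S * indep_weight n b S)"
    using U by (intro sum.cong refl) (simp add: sum_pmf_eq_1)
  also have "\<dots> = (\<Sum>S\<in>Pow {..<n}. \<Prod>i<n. if i \<in> S then \<mu>1 * b else \<mu>0 * (1 - b))"
  proof (intro sum.cong refl)
    fix S assume "S \<in> Pow {..<n}"
    then have "indep_weight n b S = (\<Prod>i<n. if i \<in> S then b else 1 - b)" by (intro indep_weight_prod) auto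
    then show "co S * indep_weight n b S = (\<Prod>i<n. if i \<in> S then \<mu>1 * b else \<mu>0 * (1 - b))"
      unfolding co_def \<open>indep_weight n b S = _\<close> by (subst prod.distrib[symmetric]) (intro prod.cong, auto)
  qed
  also have "\<dots> = (\<Prod>i<n. \<mu>1 * b + \<mu>0 * (1 - b))" by (simp add: sum_pow_prod)
  finally show ?thesis by simp
qed

lemma one_in_secret_set: "1 \<in> secret_set h"
  by (simp add: secret_set_def)

lemma finite_secret_set: "finite (secret_set h)"
  by (simp add: secret_set_def)

lemma converse_bound:
  fixes b c s A \<epsilon> h :: real
  assumes b: "0 < b" "b < c" "c < 1" and s: "0 < s" and A: "0 < A"
    and safe: "safe_protocol n h b c \<epsilon> P D"
  defines "\<mu>0 \<equiv> exp (s * ln (1 - b))"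
  defines "\<mu>1 \<equiv> \<mu>0 * (1 + (exp (- s * ln (1 - c)) - 1) / c)"
  shows "real (card (secret_set h)) * (1 - \<epsilon>) \<le> A + real (card (secret_set h)) * (exp (- s * ln A) * (\<mu>1 * b + \<mu>0 * (1 - b)) ^ n)"
proof -
  define X where "X = secret_set h"
  have valid: "valid_protocol n P" using safe by (simp add: safe_protocol_def risky_protocol_def)
  define U where "U = (\<Union>x\<in>X. \<Union>S\<in>Pow {..<n}. set_pmf (transcript P x S))"
  have finU: "finite U" unfolding U_def X_def transcript_def
    by (intro finite_UN_I finite_secret_set finite_run_support[OF valid]) auto
  have supp: "\<And>x S. x \<in> X \<Longrightarrow> S \<subseteq> {..<n} \<Longrightarrow> set_pmf (transcript P x S) \<subseteq> U"
    unfolding U_def by blast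
  define q where "q t = pmf (transcript P 1 {}) t" for t
  have qx: "pmf (transcript P x {}) t = q t" for x t
    unfolding q_def by (metis transcript_empty_indep)
  define L where "L = (\<mu>1 * b + \<mu>0 * (1 - b)) ^ n"
  define G where "G x t = Cf P t * (\<Prod>i<n. \<mu>1 * (b * Ff P x t i True) + \<mu>0 * ((1 - b) * Ff P x t i False))" for x t
  have G0: "0 \<le> G x t" for x t
  proof -
    have "ln (1 - c) < 0" using b by simp
    then have "s * ln (1 - c) \<le> 0" using s by (intro mult_nonneg_nonpos) auto
    then have "1 \<le> exp (- s * ln (1 - c))" by simp
    then have "0 \<le> (exp (- s * ln (1 - c)) - 1) / c" using b by simp
    then have "0 \<le> \<mu>1" unfolding \<mu>1_def \<mu>0_def by simp
    then show ?thesis unfolding G_def using b Cf_cases[of P t]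
      by (auto intro!: prod_nonneg add_nonneg_nonneg mult_nonneg_nonneg simp: \<mu>0_def Ff_nonneg)
  qed
  have perx: "1 - \<epsilon> \<le> A * (\<Sum>t\<in>{t\<in>U. D t = x}. q t) + exp (- s * ln A) * L" if x: "x \<in> X" for x
  proof -
    let ?Q = "\<lambda>t. (\<forall>i<n. posterior n b P x t i \<le> c) \<and> D t = x"
    have "1 - \<epsilon> \<le> cond_prob n b P x ?Q"
      using safe x unfolding safe_protocol_def risky_protocol_def X_def by blast
    also have "\<dots> = (\<Sum>t\<in>{t\<in>U. ?Q t}. trans_prob n b P x t)"
      by (rule cond_prob_sum[OF finU supp[OF x]])
    also have "\<dots> \<le> (\<Sum>t\<in>{t\<in>U. D t = x}. trans_prob n b P x t)"
      using finU b by (intro sum_mono2 trans_prob_nonneg) auto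
    also have "\<dots> \<le> (\<Sum>t\<in>{t\<in>U. D t = x}. A * q t + exp (- s * ln A) * G x t)"
    proof (intro sum_mono)
      fix t assume "t \<in> {t\<in>U. D t = x}"
      have post: "trans_prob n b P x t > 0 \<Longrightarrow> \<forall>i<n. posterior n b P x t i \<le> c"
        using safe x unfolding safe_protocol_def X_def by blast
      show "trans_prob n b P x t \<le> A * q t + exp (- s * ln A) * G x t"
        using pointwise_bound[OF b s A valid post] unfolding G_def qx \<mu>0_def \<mu>1_def by simp
    qed
    also have "\<dots> = A * (\<Sum>t\<in>{t\<in>U. D t = x}. q t) + exp (- s * ln A) * (\<Sum>t\<in>{t\<in>U. D t = x}. G x t)"
      by (simp add: sum.distrib sum_distrib_left)
    also have "(\<Sum>t\<in>{t\<in>U. D t = x}. G x t) \<le> (\<Sum>t\<in>U. G x t)"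
      using finU G0 by (intro sum_mono2) auto
    also have "(\<Sum>t\<in>U. G x t) = L"
      unfolding G_def L_def by (rule sum_G[OF valid finU supp[OF x]])
    finally show ?thesis by (simp add: mult_left_mono)
  qed
  have finX: "finite X" by (simp add: X_def finite_secret_set)
  have "(\<Sum>x\<in>X. 1 - \<epsilon>) \<le> (\<Sum>x\<in>X. A * (\<Sum>t\<in>{t\<in>U. D t = x}. q t) + exp (- s * ln A) * L)"
    using perx by (intro sum_mono) auto
  also have "\<dots> = A * (\<Sum>x\<in>X. \<Sum>t\<in>{t\<in>U. D t = x}. q t) + real (card X) * (exp (- s * ln A) * L)"
    by (simp add: sum.distrib sum_distrib_left)
  also have "(\<Sum>x\<in>X. \<Sum>t\<in>{t\<in>U. D t = x}. q t) \<le> 1"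
  proof -
    have "(\<Sum>x\<in>X. \<Sum>t\<in>{t\<in>U. D t = x}. q t) = (\<Sum>x\<in>X. \<Sum>t\<in>U. if D t = x then q t else 0)"
      by (intro sum.cong refl sum.inter_filter[OF finU])
    also have "\<dots> = (\<Sum>t\<in>U. \<Sum>x\<in>X. if D t = x then q t else 0)" by (rule sum.swap)
    also have "\<dots> = (\<Sum>t\<in>U. if D t \<in> X then q t else 0)"
      using finX by (intro sum.cong refl) (simp add: sum.delta)
    also have "\<dots> \<le> (\<Sum>t\<in>U. q t)" by (intro sum_mono) (auto simp: q_def)
    also have "\<dots> = 1" unfolding q_def
      by (rule sum_pmf_eq_1[OF finU supp]) (use one_in_secret_set[of h] in \<open>auto simp: X_def\<close>)
    finally show ?thesis .
  qed
  finally show ?thesis using A unfolding X_def L_def by (simp add: mult_left_mono)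
qed


lemma card_secret_set: "card (secret_set h) = 2 ^ nat \<lceil>h\<rceil>"
  by (simp add: secret_set_def)

lemma achievable_upper:
  fixes b c s R :: real
  assumes b: "0 < b" "b < c" "c < 1" and s: "0 < s" and ach: "safely_achievable b c R"
  shows "s * R * ln 2 \<le> s * ln (1 - b) + ln (1 + b * (exp (- s * ln (1 - c)) - 1) / c)"
proof -
  define \<mu>0 where "\<mu>0 = exp (s * ln (1 - b))"
  define \<mu>1 where "\<mu>1 = \<mu>0 * (1 + (exp (- s * ln (1 - c)) - 1) / c)"
  define Kc where "Kc = exp (- s * ln (1 - c))"
  have "ln (1 - c) < 0" using b by simp
  then have "s * ln (1 - c) \<le> 0" using s by (intro mult_nonneg_nonpos) auto
  then have Kc1: "1 \<le> Kc" unfolding Kc_def by simp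
  have inner: "0 < 1 + b * (Kc - 1) / c" using Kc1 b by (simp add: add_pos_nonneg)
  define \<Lambda> where "\<Lambda> = \<mu>1 * b + \<mu>0 * (1 - b)"
  have \<Lambda>eq: "\<Lambda> = \<mu>0 * (1 + b * (Kc - 1) / c)"
    unfolding \<Lambda>_def \<mu>1_def Kc_def using b by (simp add: field_simps)
  have \<Lambda>pos: "0 < \<Lambda>" unfolding \<Lambda>eq using inner by (simp add: \<mu>0_def)
  have ln\<Lambda>: "ln \<Lambda> = s * ln (1 - b) + ln (1 + b * (exp (- s * ln (1 - c)) - 1) / c)"
    unfolding \<Lambda>eq using inner by (simp add: ln_mult \<mu>0_def Kc_def)
  show ?thesis
  proof (rule ccontr)
    assume "\<not> ?thesis"
    then have \<delta>: "0 < s * R * ln 2 - ln \<Lambda>" unfolding ln\<Lambda> by simp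
    define n0 where "n0 = nat \<lceil>(2 * s * ln 2 + ln 2) / (s * R * ln 2 - ln \<Lambda>)\<rceil> + 1"
    obtain n P D where n: "n \<ge> n0" and safe: "safe_protocol n (real n * R) b c (1/4) P D"
      using ach unfolding safely_achievable_def by (meson zero_less_divide_1_iff zero_less_numeral)
    define k where "k = nat \<lceil>real n * R\<rceil>"
    define M where "M = real (card (secret_set (real n * R)))"
    have M: "M = 2 ^ k" by (simp add: M_def k_def card_secret_set)
    have Mpos: "0 < M" by (simp add: M)
    have kn: "real n * R \<le> real k" unfolding k_def by linarith
    have lnM: "ln M = real k * ln 2" by (simp add: M ln_realpow)
    have A: "0 < M / 4" using Mpos by simp
    from converse_bound[OF b s A safe]
    have "M * (1 - 1/4) \<le> M / 4 + M * (exp (- s * ln (M / 4)) * \<Lambda> ^ n)"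
      unfolding M_def \<Lambda>_def \<mu>1_def \<mu>0_def by simp
    then have "1/2 \<le> exp (- s * ln (M / 4)) * \<Lambda> ^ n" using Mpos by (simp add: field_simps)
    also have "\<dots> = exp (- s * ln (M / 4) + real n * ln \<Lambda>)"
    proof -
      have "exp (real n * ln \<Lambda>) = \<Lambda> ^ n" using \<Lambda>pos by (simp add: exp_of_nat_mult)
      then show ?thesis unfolding exp_add by simp
    qed
    finally have "ln (1/2) \<le> - s * ln (M / 4) + real n * ln \<Lambda>"
      by (subst ln_exp[symmetric], subst ln_le_cancel_iff) auto
    moreover have "ln (M / 4) = real k * ln 2 - 2 * ln 2"
      using Mpos by (simp add: ln_div lnM ln_realpow[of 2 2, simplified])
    ultimately have "- ln 2 \<le> - s * (real k * ln 2 - 2 * ln 2) + real n * ln \<Lambda>"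
      by (simp add: ln_div)
    moreover have "s * (real n * R) * ln 2 \<le> s * real k * ln 2"
      using kn s by (intro mult_right_mono mult_left_mono) auto
    ultimately have "real n * (s * R * ln 2 - ln \<Lambda>) \<le> 2 * s * ln 2 + ln 2"
      by (simp add: algebra_simps)
    moreover have "(2 * s * ln 2 + ln 2) / (s * R * ln 2 - ln \<Lambda>) < real n"
      using n unfolding n0_def by linarith
    ultimately show False using \<delta> by (simp add: divide_less_eq algebra_simps)
  qed
qed


lemma achievable_le_F:
  fixes b c R :: real
  assumes b: "0 < b" "b < c" "c < 1" and ach: "safely_achievable b c R"
  shows "R \<le> (- b * log 2 (1 - c) + c * log 2 (1 - b)) / c"
proof -
  define \<psi> where "\<psi> s = s * ln (1 - b) + ln (1 + b * (exp (- s * ln (1 - c)) - 1) / c)" for s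
  define D0 where "D0 = ln (1 - b) - b * ln (1 - c) / c"
  have der: "(\<psi> has_real_derivative D0) (at 0)"
    unfolding \<psi>_def D0_def using b by (auto intro!: derivative_eq_intros simp: field_simps)
  have \<psi>0: "\<psi> 0 = 0" by (simp add: \<psi>_def)
  have lim: "((\<lambda>y. \<psi> y / y) \<longlongrightarrow> D0) (at_right 0)"
  proof -
    have "((\<lambda>y. (\<psi> y - \<psi> 0) / (y - 0)) \<longlongrightarrow> D0) (at 0)"
      using der by (simp add: has_field_derivative_iff)
    then have "((\<lambda>y. \<psi> y / y) \<longlongrightarrow> D0) (at 0)" by (simp add: \<psi>0)
    then show ?thesis by (rule tendsto_mono[rotated]) (simp add: at_le)
  qed
  have ev: "eventually (\<lambda>y. R * ln 2 \<le> \<psi> y / y) (at_right 0)"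
  proof -
    have "eventually (\<lambda>y. 0 < y) (at_right (0::real))" by (simp add: eventually_at_right_less)
    then show ?thesis
    proof (rule eventually_mono)
      fix y :: real assume y: "0 < y"
      have "y * R * ln 2 \<le> \<psi> y" using achievable_upper[OF b y ach] by (simp add: \<psi>_def)
      then show "R * ln 2 \<le> \<psi> y / y" using y by (simp add: le_divide_eq algebra_simps)
    qed
  qed
  have "R * ln 2 \<le> D0" by (rule tendsto_lowerbound[OF lim ev]) simp
  then have "R \<le> D0 / ln 2" by (simp add: le_divide_eq)
  also have "D0 / ln 2 = (- b * log 2 (1 - c) + c * log 2 (1 - b)) / c"
    unfolding D0_def log_def using b by (simp add: field_simps)
  finally show ?thesis .
qed


definition dd :: "nat \<Rightarrow> nat \<Rightarrow> nat \<Rightarrow> nat" where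
  "dd N u m = (m + N - u mod N) mod N"

definition hit :: "nat \<Rightarrow> nat \<Rightarrow> nat \<Rightarrow> nat \<Rightarrow> bool" where
  "hit N K u m \<longleftrightarrow> m < N \<and> dd N u m < K"

lemma mod_inj_close_le:
  fixes x y N :: nat
  assumes "x mod N = y mod N" "x \<le> y" "y < x + N"
  shows "x = y"
proof -
  have dv: "N dvd y - x" using iffD1[OF mod_eq_dvd_iff_nat[OF assms(2)] assms(1)[symmetric]] .
  show ?thesis
  proof (rule ccontr)
    assume "x \<noteq> y"
    then have "0 < y - x" using assms(2) by simp
    then have "N \<le> y - x" by (rule dvd_imp_le[OF dv])
    then show False using assms(2,3) by linarith
  qed
qed

lemma mod_inj_close:
  fixes x y N :: nat
  assumes "x mod N = y mod N" "x < y + N" "y < x + N"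
  shows "x = y"
proof (cases "x \<le> y")
  case True then show ?thesis using mod_inj_close_le assms by blast
next
  case False then show ?thesis using mod_inj_close_le[of y N x] assms by simp
qed

lemma dd_lt: "0 < N \<Longrightarrow> dd N u m < N"
  by (simp add: dd_def)

lemma bij_dd_m:
  assumes "0 < N"
  shows "bij_betw (\<lambda>m. dd N u m) {..<N} {..<N}"
proof -
  have r: "u mod N < N" using assms by simp
  have "inj_on (\<lambda>m. dd N u m) {..<N}"
  proof (rule inj_onI)
    fix m1 m2 assume m: "m1 \<in> {..<N}" "m2 \<in> {..<N}" "dd N u m1 = dd N u m2"
    have "m1 + N - u mod N = m2 + N - u mod N"
      by (rule mod_inj_close) (use m r in \<open>auto simp: dd_def\<close>)
    then show "m1 = m2" using r by simp
  qed
  moreover have "(\<lambda>m. dd N u m) ` {..<N} \<subseteq> {..<N}" using dd_lt[OF assms] by auto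
  ultimately show ?thesis
    by (simp add: bij_betw_def endo_inj_surj)
qed

lemma bij_dd_u:
  assumes "0 < N" "m < N"
  shows "bij_betw (\<lambda>u. dd N u m) {..<N} {..<N}"
proof -
  have "inj_on (\<lambda>u. dd N u m) {..<N}"
  proof (rule inj_onI)
    fix u1 u2 assume u: "u1 \<in> {..<N}" "u2 \<in> {..<N}" "dd N u1 m = dd N u2 m"
    have m1: "u1 mod N = u1" "u2 mod N = u2" using u by simp_all
    have e: "(m + N - u1) mod N = (m + N - u2) mod N" using u(3) unfolding dd_def m1 .
    have "m + N - u1 = m + N - u2"
      by (rule mod_inj_close[OF e]) (use u in auto)
    then show "u1 = u2" using u by simp
  qed
  moreover have "(\<lambda>u. dd N u m) ` {..<N} \<subseteq> {..<N}" using dd_lt[OF assms(1)] by auto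
  ultimately show ?thesis
    by (simp add: bij_betw_def endo_inj_surj)
qed

lemma sum_lt_split:
  fixes g :: "bool \<Rightarrow> real"
  assumes "K \<le> N"
  shows "(\<Sum>e<N. g (e < K)) = real K * g True + (real N - real K) * g False"
proof -
  have "{..<N} = {..<K} \<union> {K..<N}" using assms by auto
  then have "(\<Sum>e<N. g (e < K)) = (\<Sum>e\<in>{..<K} \<union> {K..<N}. g (e < K))" by simp
  also have "\<dots> = (\<Sum>e<K. g (e < K)) + (\<Sum>e\<in>{K..<N}. g (e < K))"
    by (rule sum.union_disjoint) auto
  also have "(\<Sum>e<K. g (e < K)) = (\<Sum>e<K. g True)" by (intro sum.cong) auto
  also have "(\<Sum>e\<in>{K..<N}. g (e < K)) = (\<Sum>e\<in>{K..<N}. g False)" by (intro sum.cong) auto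
  also have "(\<Sum>e<K. g True) + (\<Sum>e\<in>{K..<N}. g False) = real K * g True + (real N - real K) * g False"
    using assms by (simp add: of_nat_diff)
  finally show ?thesis .
qed

lemma sum_hit_m:
  fixes g :: "bool \<Rightarrow> real"
  assumes "0 < N" "K \<le> N"
  shows "(\<Sum>m<N. g (hit N K u m)) = real K * g True + (real N - real K) * g False"
proof -
  have "(\<Sum>m<N. g (hit N K u m)) = (\<Sum>m<N. (\<lambda>e. g (e < K)) (dd N u m))"
    by (intro sum.cong refl) (auto simp: hit_def)
  also have "\<dots> = (\<Sum>e<N. g (e < K))"
    by (rule sum.reindex_bij_betw[OF bij_dd_m[OF assms(1)]])
  finally show ?thesis using sum_lt_split[OF assms(2)] by simp
qed

lemma sum_hit_u:
  fixes g :: "bool \<Rightarrow> real"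
  assumes "0 < N" "K \<le> N" "m < N"
  shows "(\<Sum>u<N. g (hit N K u m)) = real K * g True + (real N - real K) * g False"
proof -
  have "(\<Sum>u<N. g (hit N K u m)) = (\<Sum>u<N. (\<lambda>e. g (e < K)) (dd N u m))"
    using assms(3) by (intro sum.cong refl) (auto simp: hit_def)
  also have "\<dots> = (\<Sum>e<N. g (e < K))"
    by (rule sum.reindex_bij_betw[OF bij_dd_u[OF assms(1,3)]])
  finally show ?thesis using sum_lt_split[OF assms(2)] by simp
qed

lemma card_hit:
  assumes "0 < N" "K \<le> N"
  shows "card {m. hit N K u m} = K"
proof -
  have e: "{m. hit N K u m} = {m\<in>{..<N}. hit N K u m}" by (auto simp: hit_def)
  have "real (card {m\<in>{..<N}. hit N K u m}) = (\<Sum>m<N. (\<lambda>v. if v then 1 else 0) (hit N K u m))"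
    by (simp add: sum.inter_filter[symmetric])
  also have "\<dots> = real K" using sum_hit_m[OF assms, of "\<lambda>v. if v then 1 else 0"] by simp
  finally show ?thesis using e by simp
qed

lemma hit_self: "0 < N \<Longrightarrow> 0 < K \<Longrightarrow> hit N K u (u mod N)"
  by (simp add: hit_def dd_def)

lemma finite_hit: "finite {m. hit N K u m}"
  by (rule finite_subset[of _ "{..<N}"]) (auto simp: hit_def)


definition cproto :: "nat \<Rightarrow> nat \<Rightarrow> nat \<Rightarrow> (nat \<Rightarrow> nat \<Rightarrow> nat) \<Rightarrow> protocol" where
  "cproto n N K a = \<lparr> stops = (\<lambda>t. n \<le> length t),
     speaker = (\<lambda>t. if length t < n then length t else 0),
     p_unk = (\<lambda>t. pmf_of_set {..<N}),
     p_know = (\<lambda>t x. pmf_of_set {m. hit N K (a (length t) x) m}),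
     plength = n \<rparr>"

lemma cproto_valid:
  assumes "0 < n" "0 < N" "0 < K" "K \<le> N"
  shows "valid_protocol n (cproto n N K a)"
proof -
  have ne: "{m. hit N K u m} \<noteq> {}" for u using hit_self[OF assms(2,3), of u] by blast
  have ne2: "{..<N} \<noteq> {}" using assms(2) by auto
  show ?thesis
    unfolding valid_protocol_def cproto_def using assms ne ne2 finite_hit
    by (auto simp: set_pmf_of_set)
qed

lemma cproto_okr: "okr (cproto n N K a) n [] t \<longleftrightarrow> length t = n"
  unfolding okr_def cproto_def by auto

lemma pmf_cproto:
  assumes "0 < N" "0 < K" "K \<le> N"
  shows "pmf (transcript (cproto n N K a) x S) t =
    (if length t = n then (\<Prod>j<n. if j \<in> S then (if hit N K (a j x) (t ! j) then 1 else 0) / real K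
        else (if t ! j < N then 1 else 0) / real N) else 0)"
proof -
  have ne: "{m. hit N K u m} \<noteq> {}" for u using hit_self[OF assms(1,2), of u] by blast
  have pl: "plength (cproto n N K a) = n" by (simp add: cproto_def)
  have ne2: "{..<N} \<noteq> {}" using assms(1) by auto
  show ?thesis
  proof (cases "length t = n")
    case False then show ?thesis unfolding pmf_transcript pl cproto_okr by simp
  next
    case True
    have "(\<Prod>j<length t. pmf (dstep (cproto n N K a) x S (take j t)) (t ! j)) =
        (\<Prod>j<n. if j \<in> S then (if hit N K (a j x) (t ! j) then 1 else 0) / real K
        else (if t ! j < N then 1 else 0) / real N)"
      unfolding True
    proof (intro prod.cong refl)
      fix j assume j: "j \<in> {..<n}"
      have lt: "length (take j t) = j" using j True by simp
      show "pmf (dstep (cproto n N K a) x S (take j t)) (t ! j) = (if j \<in> S then (if hit N K (a j x) (t ! j) then 1 else 0) / real K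
        else (if t ! j < N then 1 else 0) / real N)"
        using j lt assms ne finite_hit card_hit[OF assms(1,3)] ne2
        by (auto simp: dstep_def cproto_def pmf_of_set indicator_def)
    qed
    then show ?thesis unfolding pmf_transcript pl cproto_okr using True by simp
  qed
qed

definition FF :: "nat \<Rightarrow> nat \<Rightarrow> (nat \<Rightarrow> nat \<Rightarrow> nat) \<Rightarrow> nat \<Rightarrow> nat list \<Rightarrow> nat \<Rightarrow> bool \<Rightarrow> real" where
  "FF N K a x t j v = (if v then (if hit N K (a j x) (t ! j) then 1 else 0) / real K
        else (if t ! j < N then 1 else 0) / real N)"

lemma cproto_factor:
  assumes "0 < N" "0 < K" "K \<le> N"
  shows "pmf (transcript (cproto n N K a) x S) t = (if length t = n then 1 else 0) * (\<Prod>j<n. FF N K a x t j (j \<in> S))"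
  unfolding pmf_cproto[OF assms] FF_def by (auto intro!: prod.cong)

lemma cproto_posterior:
  assumes "0 < N" "0 < K" "K \<le> N" "0 < b" "b < c" "c < 1" "i < n"
    and q: "b * real N * (1 - c) \<le> c * (1 - b) * real K"
  shows "posterior n b (cproto n N K a) x t i \<le> c"
proof -
  note pf = posterior_factor[OF cproto_factor[OF assms(1-3)] assms(7), of b]
  show ?thesis
  proof (cases "hit N K (a i x) (t ! i)")
    case True
    then have tN: "t ! i < N" by (simp add: hit_def)
    have "b * (1 / real K) / (b * (1 / real K) + (1 - b) * (1 / real N)) \<le> c"
    proof -
      have pos: "0 < b * (1 / real K) + (1 - b) * (1 / real N)" using assms by (simp add: add_pos_pos)
      have "b * (1 / real K) \<le> c * (b * (1 / real K) + (1 - b) * (1 / real N))"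
      proof -
        have "b * real N * (1 - c) / (real K * real N) \<le> c * (1 - b) * real K / (real K * real N)"
          using q assms by (intro divide_right_mono) auto
        then show ?thesis using assms by (simp add: field_simps)
      qed
      then show ?thesis by (subst pos_divide_le_eq[OF pos]) (simp add: mult.commute)
    qed
    then show ?thesis using pf True tN assms by (simp add: FF_def)
  next
    case False
    then show ?thesis using pf assms by (simp add: FF_def)
  qed
qed


definition Tn :: "nat \<Rightarrow> nat \<Rightarrow> nat list set" where
  "Tn N n = {t. set t \<subseteq> {..<N} \<and> length t = n}"

lemma finite_Tn: "finite (Tn N n)"
  unfolding Tn_def by (rule finite_lists_length_eq) simp

lemma Tn_Suc: "Tn N (Suc n) = (\<lambda>(t, m). t @ [m]) ` (Tn N n \<times> {..<N})"
proof (intro equalityI subsetI)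
  fix t assume t: "t \<in> Tn N (Suc n)"
  then have "t \<noteq> []" by (auto simp: Tn_def)
  then obtain t' m where "t = t' @ [m]" by (metis rev_exhaust)
  with t show "t \<in> (\<lambda>(t, m). t @ [m]) ` (Tn N n \<times> {..<N})"
    by (auto simp: Tn_def image_iff)
qed (auto simp: Tn_def)

lemma sum_lists_prod:
  fixes f :: "nat \<Rightarrow> nat \<Rightarrow> real"
  shows "(\<Sum>t\<in>Tn N n. \<Prod>j<n. f j (t ! j)) = (\<Prod>j<n. \<Sum>m<N. f j m)"
proof (induction n)
  case 0
  have "Tn N 0 = {[]}" by (auto simp: Tn_def)
  then show ?case by simp
next
  case (Suc n)
  have inj: "inj_on (\<lambda>(t, m). t @ [m]) (Tn N n \<times> {..<N})"
    by (auto simp: inj_on_def)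
  have "(\<Sum>t\<in>Tn N (Suc n). \<Prod>j<Suc n. f j (t ! j)) =
      (\<Sum>p\<in>Tn N n \<times> {..<N}. \<Prod>j<Suc n. f j ((case p of (t, m) \<Rightarrow> t @ [m]) ! j))"
    unfolding Tn_Suc by (subst sum.reindex[OF inj]) (simp add: comp_def)
  also have "\<dots> = (\<Sum>p\<in>Tn N n \<times> {..<N}. (\<Prod>j<n. f j (fst p ! j)) * f n (snd p))"
  proof (intro sum.cong refl)
    fix p assume p: "p \<in> Tn N n \<times> {..<N}"
    obtain t m where pe: "p = (t, m)" by (cases p)
    have lt: "length t = n" using p pe by (simp add: Tn_def)
    have "(\<Prod>j<n. f j ((t @ [m]) ! j)) = (\<Prod>j<n. f j (t ! j))"
      using lt by (intro prod.cong refl) (simp add: nth_append)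
    moreover have "(\<Prod>j<Suc n. f j ((t @ [m]) ! j)) = (\<Prod>j<n. f j ((t @ [m]) ! j)) * f n ((t @ [m]) ! n)"
      by (rule prod.lessThan_Suc)
    ultimately show "(\<Prod>j<Suc n. f j ((case p of (t, m) \<Rightarrow> t @ [m]) ! j)) = (\<Prod>j<n. f j (fst p ! j)) * f n (snd p)"
      using lt by (simp add: pe nth_append)
  qed
  also have "\<dots> = (\<Sum>t\<in>Tn N n. \<Prod>j<n. f j (t ! j)) * (\<Sum>m<N. f n m)"
    by (simp add: sum_product sum.cartesian_product case_prod_unfold)
  also have "\<dots> = (\<Prod>j<Suc n. \<Sum>m<N. f j m)" by (simp add: Suc.IH)
  finally show ?case .
qed

lemma cproto_support:
  assumes "0 < N" "0 < K" "K \<le> N"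
  shows "set_pmf (transcript (cproto n N K a) x S) \<subseteq> Tn N n"
proof
  fix t assume "t \<in> set_pmf (transcript (cproto n N K a) x S)"
  then have nz: "pmf (transcript (cproto n N K a) x S) t \<noteq> 0" by (simp add: set_pmf_iff)
  then have len: "length t = n" by (simp add: pmf_cproto[OF assms] split: if_splits)
  have "\<forall>j<n. t ! j < N"
  proof (intro allI impI)
    fix j assume j: "j < n"
    have "(\<Prod>j<n. if j \<in> S then (if hit N K (a j x) (t ! j) then 1 else 0) / real K
        else (if t ! j < N then 1 else 0) / real N) \<noteq> 0"
      using nz len by (simp add: pmf_cproto[OF assms])
    then have "\<forall>j'\<in>{..<n}. (if j' \<in> S then (if hit N K (a j' x) (t ! j') then 1 else 0) / real K
        else (if t ! j' < N then 1 else 0) / real N) \<noteq> (0::real)"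
      by (subst (asm) prod_zero_iff) auto
    then have "(if j \<in> S then (if hit N K (a j x) (t ! j) then 1 else 0) / real K
        else (if t ! j < N then 1 else 0) / real N) \<noteq> (0::real)"
      using j by blast
    then show "t ! j < N" by (auto simp: hit_def split: if_splits)
  qed
  then show "t \<in> Tn N n" using len by (auto simp: Tn_def in_set_conv_nth)
qed

definition rr :: "real \<Rightarrow> nat \<Rightarrow> nat \<Rightarrow> bool \<Rightarrow> real" where
  "rr b N K v = b * (if v then 1 else 0) / real K + (1 - b) / real N"

lemma cproto_Tp:
  assumes "0 < N" "0 < K" "K \<le> N" "t \<in> Tn N n"
  shows "trans_prob n b (cproto n N K a) x t = (\<Prod>j<n. rr b N K (hit N K (a j x) (t ! j)))"
proof -
  have "trans_prob n b (cproto n N K a) x t = (if length t = n then 1 else 0) * (\<Prod>j<n. b * FF N K a x t j True + (1 - b) * FF N K a x t j False)"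
    by (rule trans_prob_factor[OF cproto_factor[OF assms(1-3)]])
  also have "\<dots> = (\<Prod>j<n. rr b N K (hit N K (a j x) (t ! j)))"
  proof -
    have len: "length t = n" and st: "set t \<subseteq> {..<N}" using assms(4) by (auto simp: Tn_def)
    have tj: "t ! j < N" if "j < n" for j
    proof -
      have "t ! j \<in> set t" using that len by simp
      then show ?thesis using st by auto
    qed
    show ?thesis using len tj by (auto simp: FF_def rr_def intro!: prod.cong)
  qed
  finally show ?thesis .
qed

definition cnt :: "nat \<Rightarrow> nat \<Rightarrow> nat \<Rightarrow> (nat \<Rightarrow> nat \<Rightarrow> nat) \<Rightarrow> nat \<Rightarrow> nat list \<Rightarrow> nat" where
  "cnt n N K a y t = card {j\<in>{..<n}. hit N K (a j y) (t ! j)}"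

lemma pow_card_prod:
  fixes z :: real and n :: nat
  shows "z ^ card {j\<in>{..<n}. P j} = (\<Prod>j<n. if P j then z else 1)"
proof -
  have "(\<Prod>j<n. if P j then z else 1) = (\<Prod>j\<in>{..<n} \<inter> {j. P j}. z) * (\<Prod>j\<in>{..<n} \<inter> - {j. P j}. 1)"
    by (intro prod.If_cases finite_lessThan)
  also have "{..<n} \<inter> {j. P j} = {j\<in>{..<n}. P j}" by auto
  finally show ?thesis by simp
qed

definition Phi :: "real \<Rightarrow> nat \<Rightarrow> nat \<Rightarrow> real \<Rightarrow> nat \<Rightarrow> nat \<Rightarrow> real" where
  "Phi b N K z u v = (\<Sum>m<N. rr b N K (hit N K u m) * (if hit N K v m then z else 1))"

lemma expect_cnt:
  assumes "0 < N" "0 < K" "K \<le> N"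
  shows "(\<Sum>t\<in>Tn N n. trans_prob n b (cproto n N K a) x t * z ^ cnt n N K a y t) =
    (\<Prod>j<n. Phi b N K z (a j x) (a j y))"
proof -
  have "(\<Sum>t\<in>Tn N n. trans_prob n b (cproto n N K a) x t * z ^ cnt n N K a y t) =
     (\<Sum>t\<in>Tn N n. \<Prod>j<n. rr b N K (hit N K (a j x) (t ! j)) * (if hit N K (a j y) (t ! j) then z else 1))"
    unfolding cnt_def pow_card_prod by (intro sum.cong refl) (simp add: cproto_Tp[OF assms] prod.distrib)
  also have "\<dots> = (\<Prod>j<n. Phi b N K z (a j x) (a j y))"
    unfolding Phi_def by (rule sum_lists_prod)
  finally show ?thesis .
qed

lemma rr_total:
  assumes "0 < N" "0 < K" "K \<le> N"
  shows "real K * rr b N K True + (real N - real K) * rr b N K False = 1"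
proof -
  have "real K * rr b N K True + (real N - real K) * rr b N K False = b + (1 - b) * (real K + (real N - real K)) / real N"
    using assms by (simp add: rr_def field_simps)
  also have "\<dots> = 1" using assms by simp
  finally show ?thesis .
qed

lemma sum_rr:
  assumes "0 < N" "0 < K" "K \<le> N"
  shows "(\<Sum>m<N. rr b N K (hit N K u m)) = 1"
  unfolding sum_hit_m[OF assms(1,3), of "rr b N K" u] by (rule rr_total[OF assms])

lemma Phi_same:
  assumes "0 < N" "0 < K" "K \<le> N"
  shows "Phi b N K z u u = z * (b + (1 - b) * real K / real N) + (1 - b) * (real N - real K) / real N"
proof -
  have "Phi b N K z u u = real K * (rr b N K True * z) + (real N - real K) * (rr b N K False * 1)"
    unfolding Phi_def using sum_hit_m[OF assms(1,3), of "\<lambda>v. rr b N K v * (if v then z else 1)" u] by simp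
  then show ?thesis unfolding \<open>Phi b N K z u u = _\<close> using assms by (simp add: rr_def field_simps)
qed

lemma sum_Tp:
  assumes "0 < N" "0 < K" "K \<le> N"
  shows "(\<Sum>t\<in>Tn N n. trans_prob n b (cproto n N K a) x t) = 1"
  using expect_cnt[OF assms, of n b a x 1 x]
  by (simp add: Phi_def sum_rr[OF assms])

lemma Phi_nonneg:
  assumes "0 < N" "0 < K" "0 \<le> b" "b \<le> 1" "0 \<le> z"
  shows "0 \<le> Phi b N K z u v"
  unfolding Phi_def rr_def using assms by (intro sum_nonneg mult_nonneg_nonneg add_nonneg_nonneg) auto

lemma Phi_avg:
  assumes "0 < N" "0 < K" "K \<le> N"
  shows "(\<Sum>u<N. \<Sum>v<N. Phi b N K z u v) = real N * (real K * z + real N - real K)"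
proof -
  have "(\<Sum>u<N. \<Sum>v<N. Phi b N K z u v) = (\<Sum>m<N. (\<Sum>u<N. rr b N K (hit N K u m)) * (\<Sum>v<N. (if hit N K v m then z else 1)))"
  proof -
    have "(\<Sum>u<N. \<Sum>v<N. Phi b N K z u v) = (\<Sum>u<N. \<Sum>v<N. \<Sum>m<N. rr b N K (hit N K u m) * (if hit N K v m then z else 1))"
      by (simp add: Phi_def)
    also have "\<dots> = (\<Sum>u<N. \<Sum>m<N. \<Sum>v<N. rr b N K (hit N K u m) * (if hit N K v m then z else 1))"
    proof (rule sum.cong[OF refl])
      fix u
      show "(\<Sum>v<N. \<Sum>m<N. rr b N K (hit N K u m) * (if hit N K v m then z else 1)) =
         (\<Sum>m<N. \<Sum>v<N. rr b N K (hit N K u m) * (if hit N K v m then z else 1))"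
        by (rule sum.swap)
    qed
    also have "\<dots> = (\<Sum>m<N. \<Sum>u<N. \<Sum>v<N. rr b N K (hit N K u m) * (if hit N K v m then z else 1))"
      by (rule sum.swap)
    also have "\<dots> = (\<Sum>m<N. (\<Sum>u<N. rr b N K (hit N K u m)) * (\<Sum>v<N. (if hit N K v m then z else 1)))"
      by (simp only: sum_product)
    finally show ?thesis .
  qed
  also have "\<dots> = (\<Sum>m<N. 1 * (real K * z + real N - real K))"
  proof (intro sum.cong refl)
    fix m assume m: "m \<in> {..<N}"
    have "(\<Sum>u<N. rr b N K (hit N K u m)) = 1"
      unfolding sum_hit_u[OF assms(1,3) m[simplified], of "rr b N K"] by (rule rr_total[OF assms])
    moreover have "(\<Sum>v<N. (if hit N K v m then z else 1)) = real K * z + real N - real K"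
      using sum_hit_u[OF assms(1,3), of m "\<lambda>v. if v then z else 1"] m by simp
    ultimately show "(\<Sum>u<N. rr b N K (hit N K u m)) * (\<Sum>v<N. (if hit N K v m then z else 1)) = 1 * (real K * z + real N - real K)"
      by simp
  qed
  finally show ?thesis by simp
qed


lemma pair_PiE:
  fixes h :: "nat \<Rightarrow> nat \<Rightarrow> real" and J B :: "nat set"
  assumes J: "finite J" "x \<in> J" "y \<in> J" "x \<noteq> y" and B: "finite B"
  shows "(\<Sum>f\<in>PiE J (\<lambda>_. B). h (f x) (f y)) = real (card B) ^ (card J - 2) * (\<Sum>u\<in>B. \<Sum>v\<in>B. h u v)"
proof -
  define e :: "nat \<Rightarrow> nat \<Rightarrow> nat \<Rightarrow> nat \<Rightarrow> real" where "e u v j w = (if j = x then (if w = u then 1 else 0) else if j = y then (if w = v then 1 else 0) else (1::real))" for u v j w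
  have prodJ: "(\<Prod>j\<in>J. g j) = g x * (g y * (\<Prod>j\<in>J - {x} - {y}. g j))" for g :: "nat \<Rightarrow> real"
  proof -
    have "(\<Prod>j\<in>J. g j) = g x * (\<Prod>j\<in>J - {x}. g j)" using J by (simp add: prod.remove)
    also have "(\<Prod>j\<in>J - {x}. g j) = g y * (\<Prod>j\<in>J - {x} - {y}. g j)" using J by (intro prod.remove) auto
    finally show ?thesis .
  qed
  have pe: "(\<Prod>j\<in>J. e u v j (f j)) = (if f x = u then 1 else 0) * (if f y = v then 1 else 0)" for u v f
  proof -
    have "(\<Prod>j\<in>J - {x} - {y}. e u v j (f j)) = 1" by (intro prod.neutral) (auto simp: e_def)
    then show ?thesis unfolding prodJ using J(4) by (simp add: e_def)
  qed
  have "(\<Sum>f\<in>PiE J (\<lambda>_. B). h (f x) (f y)) = (\<Sum>f\<in>PiE J (\<lambda>_. B). \<Sum>u\<in>B. \<Sum>v\<in>B. h u v * (\<Prod>j\<in>J. e u v j (f j)))"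
  proof (rule sum.cong[OF refl])
    fix f assume f: "f \<in> PiE J (\<lambda>_. B)"
    then have fx: "f x \<in> B" "f y \<in> B" using J by auto
    have "(\<Sum>u\<in>B. \<Sum>v\<in>B. h u v * (\<Prod>j\<in>J. e u v j (f j))) = (\<Sum>u\<in>B. if u = f x then h u (f y) else 0)"
    proof (rule sum.cong[OF refl])
      fix u assume "u \<in> B"
      have "(\<Sum>v\<in>B. h u v * (\<Prod>j\<in>J. e u v j (f j))) = (\<Sum>v\<in>B. if v = f y then (if u = f x then h u v else 0) else 0)"
        unfolding pe by (intro sum.cong refl) auto
      also have "\<dots> = (if u = f x then h u (f y) else 0)" using fx B by (simp add: sum.delta)
      finally show "(\<Sum>v\<in>B. h u v * (\<Prod>j\<in>J. e u v j (f j))) = (if u = f x then h u (f y) else 0)" .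
    qed
    also have "\<dots> = h (f x) (f y)" using fx B by (simp add: sum.delta)
    finally show "h (f x) (f y) = (\<Sum>u\<in>B. \<Sum>v\<in>B. h u v * (\<Prod>j\<in>J. e u v j (f j)))" by simp
  qed
  also have "\<dots> = (\<Sum>u\<in>B. \<Sum>v\<in>B. h u v * (\<Sum>f\<in>PiE J (\<lambda>_. B). \<Prod>j\<in>J. e u v j (f j)))"
    by (simp add: sum_distrib_left sum.swap[of _ "PiE J (\<lambda>_. B)"])
  also have "\<dots> = (\<Sum>u\<in>B. \<Sum>v\<in>B. h u v * real (card B) ^ (card J - 2))"
  proof (intro sum.cong refl)
    fix u v assume uv: "u \<in> B" "v \<in> B"
    have "(\<Sum>f\<in>PiE J (\<lambda>_. B). \<Prod>j\<in>J. e u v j (f j)) = (\<Prod>j\<in>J. \<Sum>w\<in>B. e u v j w)"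
      using J B by (intro prod_sum_PiE[symmetric]) auto
    also have "\<dots> = (\<Sum>w\<in>B. e u v x w) * ((\<Sum>w\<in>B. e u v y w) * (\<Prod>j\<in>J - {x} - {y}. \<Sum>w\<in>B. e u v j w))"
      by (rule prodJ)
    also have "(\<Prod>j\<in>J - {x} - {y}. \<Sum>w\<in>B. e u v j w) = (\<Prod>j\<in>J - {x} - {y}. real (card B))"
      by (intro prod.cong refl) (auto simp: e_def)
    also have "\<dots> = real (card B) ^ (card J - 2)"
    proof -
      have "card (J - {x} - {y}) = card J - 2" using J by (simp add: card_Diff_subset)
      then show ?thesis by simp
    qed
    also have "(\<Sum>w\<in>B. e u v x w) = 1" using uv B by (simp add: e_def sum.delta')
    also have "(\<Sum>w\<in>B. e u v y w) = 1" using uv B J(4) by (simp add: e_def sum.delta')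
    finally show "h u v * (\<Sum>f\<in>PiE J (\<lambda>_. B). \<Prod>j\<in>J. e u v j (f j)) = h u v * real (card B) ^ (card J - 2)" by simp
  qed
  also have "\<dots> = real (card B) ^ (card J - 2) * (\<Sum>u\<in>B. \<Sum>v\<in>B. h u v)"
    by (simp add: sum_distrib_left sum_distrib_right mult.commute)
  finally show ?thesis .
qed

lemma code_avg:
  fixes \<Phi> :: "nat \<Rightarrow> nat \<Rightarrow> real" and X2 :: "nat set"
  assumes X2: "finite X2" "x \<in> X2" "y \<in> X2" "x \<noteq> y" and N: "0 < N"
  shows "(\<Sum>a\<in>PiE {..<n} (\<lambda>_. PiE X2 (\<lambda>_. {..<N})). \<Prod>j<n. \<Phi> (a j x) (a j y))
     = real (card (PiE {..<n} (\<lambda>_. PiE X2 (\<lambda>_. {..<N})))) * ((\<Sum>u<N. \<Sum>v<N. \<Phi> u v) / (real N)^2) ^ n"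
proof -
  have c2: "2 \<le> card X2"
  proof -
    have "{x, y} \<subseteq> X2" using X2 by auto
    then have "card {x, y} \<le> card X2" using X2(1) by (rule card_mono[rotated])
    then show ?thesis using X2(4) by simp
  qed
  have eq1: "(\<Sum>a\<in>PiE {..<n} (\<lambda>_. PiE X2 (\<lambda>_. {..<N})). \<Prod>j<n. \<Phi> (a j x) (a j y))
      = (\<Prod>j<n. \<Sum>f\<in>PiE X2 (\<lambda>_. {..<N}). \<Phi> (f x) (f y))"
    using X2(1) by (intro prod_sum_PiE[symmetric]) (auto intro: finite_PiE)
  also have "\<dots> = (\<Prod>j<n. real N ^ (card X2 - 2) * (\<Sum>u<N. \<Sum>v<N. \<Phi> u v))"
    using pair_PiE[OF X2, of "{..<N}" \<Phi>] by simp
  also have "\<dots> = (real N ^ card X2 * ((\<Sum>u<N. \<Sum>v<N. \<Phi> u v) / (real N)^2)) ^ n"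
  proof -
    have "real N ^ card X2 = real N ^ (card X2 - 2) * (real N)^2"
      using c2 by (metis le_add_diff_inverse2 power_add)
    then show ?thesis using N by (simp add: field_simps)
  qed
  finally have eq1: "(\<Sum>a\<in>PiE {..<n} (\<lambda>_. PiE X2 (\<lambda>_. {..<N})). \<Prod>j<n. \<Phi> (a j x) (a j y))
     = (real N ^ card X2 * ((\<Sum>u<N. \<Sum>v<N. \<Phi> u v) / (real N)^2)) ^ n" .
  have c: "real (card (PiE {..<n} (\<lambda>_. PiE X2 (\<lambda>_. {..<N})))) = (real N ^ card X2) ^ n"
    using X2(1) by (simp add: card_PiE finite_PiE)
  show ?thesis by (simp only: eq1 c power_mult_distrib)
qed

lemma expurgate:
  fixes V :: "'c \<Rightarrow> nat \<Rightarrow> real"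
  assumes AC: "finite AC" "AC \<noteq> {}" and X2: "finite X2" "card X2 = 2 * M"
    and V0: "\<And>a x. 0 \<le> V a x" and T: "0 \<le> T"
    and S: "(\<Sum>a\<in>AC. \<Sum>x\<in>X2. V a x) \<le> real (card AC) * (2 * real M * T)"
  shows "\<exists>a\<in>AC. \<exists>Y\<subseteq>X2. card Y = M \<and> (\<forall>x\<in>Y. V a x \<le> 2 * T)"
proof -
  obtain a where a: "a \<in> AC" "(\<Sum>x\<in>X2. V a x) \<le> 2 * real M * T"
  proof (rule ccontr)
    assume "\<not> thesis"
    then have "\<forall>a\<in>AC. 2 * real M * T < (\<Sum>x\<in>X2. V a x)" using that by force
    then have "(\<Sum>a\<in>AC. 2 * real M * T) < (\<Sum>a\<in>AC. \<Sum>x\<in>X2. V a x)"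
      using AC by (intro sum_strict_mono) auto
    then show False using S by simp
  qed
  define G where "G = {x\<in>X2. V a x \<le> 2 * T}"
  have "M \<le> card G"
  proof (rule ccontr)
    assume "\<not> M \<le> card G"
    then have cG: "card G < M" by simp
    have fG: "finite G" using X2 by (simp add: G_def)
    have GX: "G \<subseteq> X2" by (auto simp: G_def)
    have cD: "card (X2 - G) = 2 * M - card G" using X2 GX by (simp add: card_Diff_subset fG)
    then have cD2: "M + 1 \<le> card (X2 - G)" using cG by simp
    have ne: "X2 - G \<noteq> {}"
    proof
      assume e: "X2 - G = {}"
      have "card (X2 - G) = 0" unfolding e by (rule card.empty)
      then show False using cD2 by linarith
    qed
    have "(\<Sum>x\<in>X2 - G. 2 * T) < (\<Sum>x\<in>X2 - G. V a x)"
      using X2 ne by (intro sum_strict_mono) (auto simp: G_def)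
    also have "\<dots> \<le> (\<Sum>x\<in>X2. V a x)" using X2 V0 by (intro sum_mono2) auto
    also have "\<dots> \<le> 2 * real M * T" by (rule a(2))
    finally have "real (card (X2 - G)) * (2 * T) < 2 * real M * T" by simp
    moreover have "real M * (2 * T) \<le> real (card (X2 - G)) * (2 * T)"
      using cD2 T by (intro mult_right_mono) auto
    ultimately show False by simp
  qed
  then obtain Y where "Y \<subseteq> G" "card Y = M" by (meson obtain_subset_with_card_n)
  then show ?thesis using a(1) by (intro bexI[of _ a] exI[of _ Y]) (auto simp: G_def)
qed


definition Dv :: "real \<Rightarrow> real \<Rightarrow> real" where
  "Dv t q = t * (ln t - ln q) + (1 - t) * (ln (1 - t) - ln (1 - q))"

lemma Dv_limit_value:
  fixes b c :: real
  assumes b: "0 < b" "b < c" "c < 1"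
  shows "Dv (b / c) (b * (1 - c) / (c * (1 - b))) = ln (1 - b) - b * ln (1 - c) / c"
proof -
  have c0: "0 < c" "c - b > 0" "1 - b > 0" "1 - c > 0" using b by auto
  have l1: "ln (b / c) - ln (b * (1 - c) / (c * (1 - b))) = ln (1 - b) - ln (1 - c)"
    using c0 b by (simp add: ln_div ln_mult)
  have e1: "1 - b / c = (c - b) / c" using c0 by (simp add: field_simps)
  have e2: "1 - b * (1 - c) / (c * (1 - b)) = (c - b) / (c * (1 - b))" using c0 by (simp add: field_simps)
  have l2: "ln (1 - b / c) - ln (1 - b * (1 - c) / (c * (1 - b))) = ln (1 - b)"
    unfolding e1 e2 using c0 by (simp add: ln_div ln_mult)
  show ?thesis unfolding Dv_def l1 l2 using c0 by (simp add: field_simps)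
qed

lemma exp_rate_lemma:
  fixes q t R :: real
  assumes "0 < q" "q < t" "t < 1" "R * ln 2 < Dv t q"
  defines "z \<equiv> t * (1 - q) / (q * (1 - t))"
  shows "1 \<le> z" "R * ln 2 + ln (q * z + (1 - q)) - t * ln z < 0"
proof -
  have p: "0 < 1 - t" "0 < 1 - q" "0 < t" using assms by auto
  have "q * (1 - t) \<le> t * (1 - q)" using assms by (simp add: algebra_simps)
  then show "1 \<le> z" unfolding z_def using assms p by (simp add: le_divide_eq)
  have e: "q * z + (1 - q) = (1 - q) / (1 - t)"
    unfolding z_def using assms p by (simp add: field_simps)
  have lz: "ln z = ln t + ln (1 - q) - ln q - ln (1 - t)"
    unfolding z_def using assms p by (simp add: ln_div ln_mult)
  have lb: "ln (q * z + (1 - q)) = ln (1 - q) - ln (1 - t)"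
    unfolding e using p by (simp add: ln_div)
  have "ln (q * z + (1 - q)) - t * ln z = - Dv t q"
    unfolding lz lb Dv_def by (simp add: algebra_simps)
  then show "R * ln 2 + ln (q * z + (1 - q)) - t * ln z < 0" using assms(4) by simp
qed

lemma small_rate_lemma:
  fixes p t :: real
  assumes "0 < p" "p < 1" "t < p"
  shows "\<exists>z'. 0 < z' \<and> z' < 1 \<and> ln (z' * p + (1 - p)) - t * ln z' < 0"
proof -
  define h where "h w = ln (w * p + (1 - p)) - t * ln w" for w
  have "(h has_real_derivative (p - t)) (at 1)"
    unfolding h_def using assms by (auto intro!: derivative_eq_intros)
  from DERIV_pos_inc_left[OF this] assms obtain d where d: "d > 0" "\<And>e. e > 0 \<Longrightarrow> e < d \<Longrightarrow> h (1 - e) < h 1"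
    by auto
  define e where "e = min (d / 2) (1 / 2)"
  have e: "0 < e" "e < d" "e \<le> 1/2" using d by (auto simp: e_def)
  have "h (1 - e) < h 1" using d(2) e by simp
  moreover have "h 1 = 0" by (simp add: h_def)
  ultimately show ?thesis using e by (intro exI[of _ "1 - e"]) (auto simp: h_def)
qed

lemma params_exist:
  fixes b c R :: real
  assumes b: "0 < b" "b < c" "c < 1" and R: "R * ln 2 < ln (1 - b) - b * ln (1 - c) / c"
  shows "\<exists>N K t. 0 < N \<and> 0 < K \<and> K < N \<and> b * real N * (1 - c) \<le> c * (1 - b) * real K \<and>
      real K / real N < t \<and> t < b + (1 - b) * (real K / real N) \<and> t < 1 \<and>
      R * ln 2 < Dv t (real K / real N)"
proof -
  define \<kappa> where "\<kappa> = b * (1 - c) / (c * (1 - b))"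
  have \<kappa>: "0 < \<kappa>" "\<kappa> < 1"
  proof -
    show "0 < \<kappa>" using b by (simp add: \<kappa>_def)
    have "b * (1 - c) < c * (1 - b)" using b by (simp add: algebra_simps)
    then show "\<kappa> < 1" using b by (simp add: \<kappa>_def)
  qed
  have bc: "\<kappa> < b / c" "b / c < 1"
  proof -
    have "b * (1 - c) / (c * (1 - b)) < b / c \<longleftrightarrow> b * (1 - c) * c < b * (c * (1 - b))"
      using b by (simp add: field_simps)
    also have "\<dots>" using b by (simp add: algebra_simps)
    finally show "\<kappa> < b / c" by (simp add: \<kappa>_def)
    show "b / c < 1" using b by simp
  qed
  define KN where "KN N = nat \<lceil>\<kappa> * real N\<rceil>" for N :: nat
  define qn where "qn N = real (KN N) / real N" for N :: nat
  define tn where "tn N = b + (1 - b) * qn N - inverse (real N)" for N :: nat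
  have KNr: "real (KN N) = real_of_int \<lceil>\<kappa> * real N\<rceil>" for N
  proof -
    have "\<kappa> * real N \<le> of_int \<lceil>\<kappa> * real N\<rceil>" by (rule le_of_int_ceiling)
    moreover have "0 \<le> \<kappa> * real N" using \<kappa> by simp
    ultimately have "0 \<le> \<lceil>\<kappa> * real N\<rceil>" by linarith
    then show ?thesis unfolding KN_def by simp
  qed
  have qlo: "\<kappa> \<le> qn N" if "N > 0" for N
  proof -
    have "\<kappa> * real N \<le> real (KN N)" unfolding KNr by linarith
    then show ?thesis using that by (simp add: qn_def le_divide_eq)
  qed
  have qhi: "qn N \<le> \<kappa> + inverse (real N)" if "N > 0" for N
  proof -
    have "real (KN N) \<le> \<kappa> * real N + 1" unfolding KNr by linarith
    then have "real (KN N) / real N \<le> (\<kappa> * real N + 1) / real N" by (rule divide_right_mono) auto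
    also have "\<dots> = \<kappa> + inverse (real N)" using that by (simp add: field_simps)
    finally show ?thesis by (simp add: qn_def)
  qed
  have qlim: "qn \<longlonglongrightarrow> \<kappa>"
  proof (rule tendsto_sandwich[of "\<lambda>_. \<kappa>" _ _ "\<lambda>N. \<kappa> + inverse (real N)"])
    show "\<forall>\<^sub>F N in sequentially. \<kappa> \<le> qn N"
      using eventually_gt_at_top[of 0] by eventually_elim (rule qlo)
    show "\<forall>\<^sub>F N in sequentially. qn N \<le> \<kappa> + inverse (real N)"
      using eventually_gt_at_top[of 0] by eventually_elim (rule qhi)
    show "((\<lambda>N. \<kappa> + inverse (real N)) \<longlongrightarrow> \<kappa>) sequentially"
      using tendsto_add[OF tendsto_const lim_inverse_n, of \<kappa>] by simp
  qed simp
  have tlim: "tn \<longlonglongrightarrow> b / c"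
  proof -
    have "tn \<longlonglongrightarrow> b + (1 - b) * \<kappa> - 0"
      unfolding tn_def by (intro tendsto_intros qlim lim_inverse_n)
    moreover have "b + (1 - b) * \<kappa> = b / c" unfolding \<kappa>_def using b by (simp add: field_simps)
    ultimately show ?thesis by simp
  qed
  have Dlim: "(\<lambda>N. Dv (tn N) (qn N)) \<longlonglongrightarrow> Dv (b / c) \<kappa>"
    unfolding Dv_def using b \<kappa> bc
    by (intro tendsto_intros tlim qlim) auto
  have Dval: "Dv (b / c) \<kappa> = ln (1 - b) - b * ln (1 - c) / c"
    unfolding \<kappa>_def by (rule Dv_limit_value[OF b])
  have ev: "\<forall>\<^sub>F N in sequentially. R * ln 2 < Dv (tn N) (qn N) \<and> qn N < tn N \<and> tn N < 1 \<and> qn N < 1 \<and> 0 < N"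
  proof -
    have e1: "\<forall>\<^sub>F N in sequentially. R * ln 2 < Dv (tn N) (qn N)"
      using order_tendstoD(1)[OF Dlim] R Dval by simp
    have "(\<lambda>N. tn N - qn N) \<longlonglongrightarrow> b / c - \<kappa>" by (intro tendsto_intros tlim qlim)
    from order_tendstoD(1)[OF this, of 0] bc
    have "\<forall>\<^sub>F N in sequentially. 0 < tn N - qn N" by simp
    then have e2: "\<forall>\<^sub>F N in sequentially. qn N < tn N" by (rule eventually_mono) simp
    have e3: "\<forall>\<^sub>F N in sequentially. tn N < 1" using order_tendstoD(2)[OF tlim bc(2)] .
    have e4: "\<forall>\<^sub>F N in sequentially. qn N < 1" using order_tendstoD(2)[OF qlim \<kappa>(2)] .
    have e5: "\<forall>\<^sub>F N in sequentially. 0 < N" by (rule eventually_gt_at_top)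
    show ?thesis using e1 e2 e3 e4 e5 by eventually_elim auto
  qed
  then obtain N where N: "R * ln 2 < Dv (tn N) (qn N)" "qn N < tn N" "tn N < 1" "qn N < 1" "0 < N"
    by (auto simp: eventually_sequentially)
  have K0: "0 < KN N"
  proof -
    have "0 < \<kappa> * real N" using \<kappa> N(5) by simp
    then show ?thesis unfolding KN_def by simp
  qed
  have KN: "KN N < N"
  proof -
    have "real (KN N) < real N" using N(4) N(5) by (simp add: qn_def divide_less_eq)
    then show ?thesis by simp
  qed
  have safe: "b * real N * (1 - c) \<le> c * (1 - b) * real (KN N)"
  proof -
    have "\<kappa> * real N \<le> real (KN N)" using qlo[OF N(5)] N(5) by (simp add: qn_def le_divide_eq)
    then have "b * (1 - c) / (c * (1 - b)) * real N * (c * (1 - b)) \<le> real (KN N) * (c * (1 - b))"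
      using b by (intro mult_right_mono) (auto simp: \<kappa>_def)
    moreover have "b * (1 - c) / (c * (1 - b)) * real N * (c * (1 - b)) = b * real N * (1 - c)"
      using b by (simp add: field_simps)
    ultimately show ?thesis by (simp add: mult.commute mult.left_commute)
  qed
  have tp: "tn N < b + (1 - b) * qn N" using N(5) by (simp add: tn_def)
  have c5: "real (KN N) / real N < tn N" using N(2) by (simp add: qn_def)
  have c6: "tn N < b + (1 - b) * (real (KN N) / real N)" using tp by (simp add: qn_def)
  have c8: "R * ln 2 < Dv (tn N) (real (KN N) / real N)" using N(1) by (simp add: qn_def)
  show ?thesis using N(5) K0 KN safe c5 c6 N(3) c8 by blast
qed


definition Dec :: "nat \<Rightarrow> nat \<Rightarrow> nat \<Rightarrow> (nat \<Rightarrow> nat \<Rightarrow> nat) \<Rightarrow> real \<Rightarrow> nat set \<Rightarrow> nat list \<Rightarrow> nat" where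
  "Dec n N K a \<tau> X t = (if \<exists>y\<in>X. \<tau> * real n \<le> real (cnt n N K a y t)
     then LEAST y. y \<in> X \<and> \<tau> * real n \<le> real (cnt n N K a y t) else 1)"

lemma Dec_in: "1 \<in> X \<Longrightarrow> Dec n N K a \<tau> X t \<in> X"
  unfolding Dec_def by (auto intro: LeastI2_ex)

lemma Dec_wrong:
  assumes "x \<in> X" "Dec n N K a \<tau> X t \<noteq> x"
  shows "real (cnt n N K a x t) < \<tau> * real n \<or> (\<exists>y\<in>X - {x}. \<tau> * real n \<le> real (cnt n N K a y t))"
proof (cases "real (cnt n N K a x t) < \<tau> * real n")
  case True then show ?thesis by simp
next
  case False
  then have ex: "\<exists>y. y \<in> X \<and> \<tau> * real n \<le> real (cnt n N K a y t)" using assms(1) by auto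
  then have D: "Dec n N K a \<tau> X t = (LEAST y. y \<in> X \<and> \<tau> * real n \<le> real (cnt n N K a y t))"
    unfolding Dec_def by auto
  have "Dec n N K a \<tau> X t \<in> X \<and> \<tau> * real n \<le> real (cnt n N K a (Dec n N K a \<tau> X t) t)"
    using LeastI_ex[OF ex] unfolding D by simp
  then show ?thesis using assms(2) by blast
qed

lemma pow_exp: "0 < z \<Longrightarrow> (z::real) ^ k = exp (real k * ln z)"
  by (simp add: exp_of_nat_mult)

lemma protocol_good:
  fixes b c \<tau> z z' W \<epsilon> h :: real
  assumes NK: "0 < N" "0 < K" "K \<le> N" and sf: "b * real N * (1 - c) \<le> c * (1 - b) * real K"
    and b: "0 < b" "b < c" "c < 1" and n: "0 < n"
    and z': "0 < z'" "z' < 1" and z: "1 \<le> z"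
    and W: "\<And>x. x \<in> secret_set h \<Longrightarrow> (\<Sum>y\<in>secret_set h - {x}. \<Prod>j<n. Phi b N K z (a j x) (a j y)) \<le> W"
    and eps: "exp (- \<tau> * real n * ln z') * (z' * (b + (1 - b) * real K / real N) + (1 - b) * (real N - real K) / real N) ^ n
         + exp (- \<tau> * real n * ln z) * W \<le> \<epsilon>"
  shows "safe_protocol n h b c \<epsilon> (cproto n N K a) (Dec n N K a \<tau> (secret_set h))"
proof -
  define X where "X = secret_set h"
  define P where "P = cproto n N K a"
  define D where "D = Dec n N K a \<tau> X"
  define Tp where "Tp x t = trans_prob n b P x t" for x t
  define e1 where "e1 = exp (- \<tau> * real n * ln z')"
  define e2 where "e2 = exp (- \<tau> * real n * ln z)"
  have post: "\<And>i t x. i < n \<Longrightarrow> posterior n b P x t i \<le> c"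
    unfolding P_def by (rule cproto_posterior[OF NK b _ sf])
  have valid: "valid_protocol n P" unfolding P_def by (rule cproto_valid[OF n NK])
  have Tp0: "0 \<le> Tp x t" for x t unfolding Tp_def by (rule trans_prob_nonneg) (use b in auto)
  have perx: "1 - \<epsilon> \<le> cond_prob n b P x (\<lambda>t. (\<forall>i<n. posterior n b P x t i \<le> c) \<and> D t = x)"
    if x: "x \<in> X" for x
  proof -
    have "cond_prob n b P x (\<lambda>t. (\<forall>i<n. posterior n b P x t i \<le> c) \<and> D t = x) =
       (\<Sum>t\<in>{t\<in>Tn N n. (\<forall>i<n. posterior n b P x t i \<le> c) \<and> D t = x}. Tp x t)"
      unfolding Tp_def P_def by (rule cond_prob_sum[OF finite_Tn cproto_support[OF NK]])
    also have "\<dots> = (\<Sum>t\<in>{t\<in>Tn N n. D t = x}. Tp x t)" using post by simp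
    also have "\<dots> = 1 - (\<Sum>t\<in>{t\<in>Tn N n. D t \<noteq> x}. Tp x t)"
    proof -
      have "(\<Sum>t\<in>Tn N n. Tp x t) = (\<Sum>t\<in>{t\<in>Tn N n. D t = x}. Tp x t) + (\<Sum>t\<in>{t\<in>Tn N n. D t \<noteq> x}. Tp x t)"
        using finite_Tn by (subst sum.inter_filter, simp, subst sum.inter_filter, simp, subst sum.distrib[symmetric]) (intro sum.cong, auto)
      moreover have "(\<Sum>t\<in>Tn N n. Tp x t) = 1" unfolding Tp_def P_def by (rule sum_Tp[OF NK])
      ultimately show ?thesis by simp
    qed
    finally have cp: "cond_prob n b P x (\<lambda>t. (\<forall>i<n. posterior n b P x t i \<le> c) \<and> D t = x) = 1 - (\<Sum>t\<in>{t\<in>Tn N n. D t \<noteq> x}. Tp x t)" .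
    define B where "B t = z' ^ cnt n N K a x t * e1 + (\<Sum>y\<in>X - {x}. z ^ cnt n N K a y t * e2)" for t
    have B0: "0 \<le> B t" for t using z z' unfolding B_def e1_def e2_def by (intro add_nonneg_nonneg sum_nonneg) auto
    have B1: "1 \<le> B t" if "D t \<noteq> x" for t
    proof -
      have "real (cnt n N K a x t) < \<tau> * real n \<or> (\<exists>y\<in>X - {x}. \<tau> * real n \<le> real (cnt n N K a y t))"
        using Dec_wrong[OF x, of n N K a \<tau> t] that unfolding D_def by simp
      then show ?thesis
      proof
        assume lt: "real (cnt n N K a x t) < \<tau> * real n"
        have "ln z' < 0" using z' by simp
        then have "\<tau> * real n * ln z' \<le> real (cnt n N K a x t) * ln z'"
          using lt by (intro mult_right_mono_neg) auto
        then have "1 \<le> exp (real (cnt n N K a x t) * ln z' - \<tau> * real n * ln z')" by simp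
        also have "\<dots> = z' ^ cnt n N K a x t * e1"
          unfolding e1_def using z' by (simp add: pow_exp exp_diff exp_minus field_simps)
        also have "\<dots> \<le> B t" unfolding B_def using z z' by (intro add_increasing2 sum_nonneg) (auto simp: e2_def)
        finally show ?thesis .
      next
        assume "\<exists>y\<in>X - {x}. \<tau> * real n \<le> real (cnt n N K a y t)"
        then obtain y where y: "y \<in> X - {x}" "\<tau> * real n \<le> real (cnt n N K a y t)" by blast
        have "0 \<le> ln z" using z by simp
        then have "\<tau> * real n * ln z \<le> real (cnt n N K a y t) * ln z"
          using y by (intro mult_right_mono) auto
        then have "1 \<le> exp (real (cnt n N K a y t) * ln z - \<tau> * real n * ln z)" by simp
        also have "\<dots> = z ^ cnt n N K a y t * e2"
          unfolding e2_def using z by (simp add: pow_exp exp_diff exp_minus field_simps)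
        also have "\<dots> \<le> (\<Sum>y\<in>X - {x}. z ^ cnt n N K a y t * e2)"
          using y z by (intro member_le_sum) (auto simp: e2_def X_def finite_secret_set)
        also have "\<dots> \<le> B t" unfolding B_def using z' by (simp add: e1_def)
        finally show ?thesis .
      qed
    qed
    have "(\<Sum>t\<in>{t\<in>Tn N n. D t \<noteq> x}. Tp x t) \<le> (\<Sum>t\<in>{t\<in>Tn N n. D t \<noteq> x}. Tp x t * B t)"
    proof (intro sum_mono)
      fix t assume "t \<in> {t\<in>Tn N n. D t \<noteq> x}"
      then have "1 \<le> B t" using B1 by simp
      from mult_left_mono[OF this Tp0[of x t]] show "Tp x t \<le> Tp x t * B t" by simp
    qed
    also have "\<dots> \<le> (\<Sum>t\<in>Tn N n. Tp x t * B t)"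
      using finite_Tn Tp0 B0 by (intro sum_mono2) auto
    also have "\<dots> = e1 * (\<Sum>t\<in>Tn N n. Tp x t * z' ^ cnt n N K a x t) + e2 * (\<Sum>y\<in>X - {x}. \<Sum>t\<in>Tn N n. Tp x t * z ^ cnt n N K a y t)"
      unfolding B_def by (simp add: distrib_left sum.distrib sum_distrib_left sum_distrib_right mult_ac sum.swap[of _ "X - {x}"])
    also have "(\<Sum>t\<in>Tn N n. Tp x t * z' ^ cnt n N K a x t) = (\<Prod>j<n. Phi b N K z' (a j x) (a j x))"
      unfolding Tp_def P_def by (rule expect_cnt[OF NK])
    also have "\<dots> = (z' * (b + (1 - b) * real K / real N) + (1 - b) * (real N - real K) / real N) ^ n"
      by (simp add: Phi_same[OF NK])
    also have "(\<Sum>y\<in>X - {x}. \<Sum>t\<in>Tn N n. Tp x t * z ^ cnt n N K a y t) = (\<Sum>y\<in>X - {x}. \<Prod>j<n. Phi b N K z (a j x) (a j y))"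
      unfolding Tp_def P_def by (intro sum.cong refl expect_cnt[OF NK])
    also have "\<dots> \<le> W" using W x unfolding X_def by simp
    finally have "(\<Sum>t\<in>{t\<in>Tn N n. D t \<noteq> x}. Tp x t) \<le> e1 * (z' * (b + (1 - b) * real K / real N) + (1 - b) * (real N - real K) / real N) ^ n + e2 * W"
      by (simp add: e2_def)
    also have "\<dots> \<le> \<epsilon>" using eps unfolding e1_def e2_def by (simp add: mult.commute)
    finally show ?thesis unfolding cp by simp
  qed
  show ?thesis
    unfolding safe_protocol_def risky_protocol_def
    using valid perx post Dec_in[OF one_in_secret_set]
    by (simp add: P_def D_def X_def)
qed


lemma exp_pow_eq: "0 < x \<Longrightarrow> (x::real) ^ n = exp (real n * ln x)"
  by (simp add: exp_of_nat_mult)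

lemma ev_small:
  fixes \<rho> \<delta> :: real
  assumes "\<rho> < 0" "0 < \<delta>"
  shows "\<forall>\<^sub>F n in sequentially. exp (real n * \<rho>) < \<delta>"
proof -
  have "(\<lambda>n. exp \<rho> ^ n) \<longlonglongrightarrow> 0" using assms(1) by (intro LIMSEQ_power_zero) auto
  then have "\<forall>\<^sub>F n in sequentially. exp \<rho> ^ n < \<delta>" using assms(2) by (rule order_tendstoD(2))
  then show ?thesis by (rule eventually_mono) (simp add: exp_of_nat_mult)
qed

lemma M_bound:
  fixes R :: real
  assumes "0 < R"
  shows "real (2 ^ nat \<lceil>real n * R\<rceil> :: nat) \<le> 2 * exp (real n * (R * ln 2))"
proof -
  define k where "k = nat \<lceil>real n * R\<rceil>"
  have "real k \<le> real n * R + 1" unfolding k_def using assms by (simp add: of_nat_nat)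
  then have "real k * ln 2 \<le> (real n * R + 1) * ln 2" by (intro mult_right_mono) auto
  then have "exp (real k * ln 2) \<le> exp ((real n * R + 1) * ln 2)" by simp
  moreover have "real (2 ^ k :: nat) = exp (real k * ln 2)" by (simp add: exp_pow_eq)
  moreover have "exp ((real n * R + 1) * ln 2) = 2 * exp (real n * (R * ln 2))"
  proof -
    have "(real n * R + 1) * ln 2 = real n * (R * ln 2) + ln 2" by (simp add: algebra_simps)
    then show ?thesis by (simp add: exp_add)
  qed
  ultimately show ?thesis unfolding k_def by simp
qed


lemma card_secret_set': "card (secret_set h) = 2 ^ nat \<lceil>h\<rceil>"
  by (simp add: secret_set_def)

lemma construct:
  fixes b c R \<tau> z z' \<epsilon> :: real
  assumes NK: "0 < N" "0 < K" "K \<le> N" and sf: "b * real N * (1 - c) \<le> c * (1 - b) * real K"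
    and b: "0 < b" "b < c" "c < 1" and n: "0 < n" and R: "0 < R"
    and z': "0 < z'" "z' < 1" and z: "1 \<le> z"
    and eps: "exp (real n * (ln (z' * (b + (1 - b) * real K / real N) + (1 - b) * (real N - real K) / real N) - \<tau> * ln z'))
       + 8 * exp (real n * (R * ln 2 + ln ((real K * z + real N - real K) / real N) - \<tau> * ln z)) \<le> \<epsilon>"
  shows "\<exists>P D. safe_protocol n (real n * R) b c \<epsilon> P D"
proof -
  define M where "M = (2 ^ nat \<lceil>real n * R\<rceil> :: nat)"
  define X where "X = secret_set (real n * R)"
  define X2 where "X2 = {1..2 * M}"
  define AC where "AC = PiE {..<n} (\<lambda>_. PiE X2 (\<lambda>_. {..<N}))"
  define \<beta> where "\<beta> = (real K * z + real N - real K) / real N"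
  define V where "V a x = (\<Sum>y\<in>X2 - {x}. \<Prod>j<n. Phi b N K z (a j x) (a j y))" for a x
  define T where "T = (2 * real M - 1) * \<beta> ^ n"
  have M0: "0 < M" by (simp add: M_def)
  have cX: "card X = M" by (simp add: X_def M_def card_secret_set')
  have fX: "finite X" by (simp add: X_def finite_secret_set)
  have cX2: "card X2 = 2 * M" by (simp add: X2_def)
  have fX2: "finite X2" by (simp add: X2_def)
  have \<beta>0: "0 < \<beta>"
  proof -
    have "real K * 1 \<le> real K * z" using z by (intro mult_left_mono) auto
    moreover have "0 < real N" using NK by simp
    ultimately have "0 < real K * z + real N - real K" by linarith
    then show ?thesis unfolding \<beta>_def using NK by simp
  qed
  have T0: "0 \<le> T" unfolding T_def using M0 \<beta>0 by (intro mult_nonneg_nonneg) auto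
  have Phi0: "0 \<le> Phi b N K z u v" for u v using NK b z by (intro Phi_nonneg) auto
  have V0: "0 \<le> V a x" for a x unfolding V_def using Phi0 by (intro sum_nonneg prod_nonneg) auto
  have fAC: "finite AC" unfolding AC_def using fX2 by (intro finite_PiE) auto
  have neN: "{..<N} \<noteq> {}" using NK(1) by auto
  have neAC: "AC \<noteq> {}" unfolding AC_def using neN by (simp add: PiE_eq_empty_iff)
  have avg: "(\<Sum>a\<in>AC. \<Prod>j<n. Phi b N K z (a j x) (a j y)) = real (card AC) * \<beta> ^ n"
    if "x \<in> X2" "y \<in> X2" "x \<noteq> y" for x y
  proof -
    have "(\<Sum>a\<in>AC. \<Prod>j<n. Phi b N K z (a j x) (a j y)) = real (card AC) * ((\<Sum>u<N. \<Sum>v<N. Phi b N K z u v) / (real N)^2) ^ n"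
      unfolding AC_def by (rule code_avg[OF fX2 that NK(1)])
    also have "(\<Sum>u<N. \<Sum>v<N. Phi b N K z u v) / (real N)^2 = \<beta>"
      unfolding Phi_avg[OF NK] \<beta>_def using NK by (simp add: power2_eq_square)
    finally show ?thesis .
  qed
  have S: "(\<Sum>a\<in>AC. \<Sum>x\<in>X2. V a x) \<le> real (card AC) * (2 * real M * T)"
  proof -
    have "(\<Sum>a\<in>AC. \<Sum>x\<in>X2. V a x) = (\<Sum>x\<in>X2. \<Sum>y\<in>X2 - {x}. \<Sum>a\<in>AC. \<Prod>j<n. Phi b N K z (a j x) (a j y))"
      unfolding V_def by (subst sum.swap) (simp add: sum.swap[of _ AC])
    also have "\<dots> = (\<Sum>x\<in>X2. \<Sum>y\<in>X2 - {x}. real (card AC) * \<beta> ^ n)"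
      by (intro sum.cong refl avg) auto
    also have "\<dots> = real (card AC) * (2 * real M * T)"
    proof -
      have "card (X2 - {x}) = 2 * M - 1" if "x \<in> X2" for x using that fX2 cX2 by simp
      then have "(\<Sum>x\<in>X2. \<Sum>y\<in>X2 - {x}. real (card AC) * \<beta> ^ n) = (\<Sum>x\<in>X2. real (2 * M - 1) * (real (card AC) * \<beta> ^ n))"
        by (intro sum.cong refl) simp
      also have "\<dots> = real (2 * M) * (real (2 * M - 1) * (real (card AC) * \<beta> ^ n))" using cX2 by simp
      also have "\<dots> = real (card AC) * (2 * real M * T)"
        unfolding T_def using M0 by (simp add: of_nat_diff)
      finally show ?thesis .
    qed
    finally show ?thesis by simp
  qed
  obtain a Y where a: "a \<in> AC" and Y: "Y \<subseteq> X2" "card Y = M" "\<And>x. x \<in> Y \<Longrightarrow> V a x \<le> 2 * T"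
    using expurgate[OF fAC neAC fX2 cX2 V0 T0 S] by blast
  have fY: "finite Y" using Y(1) fX2 finite_subset by blast
  obtain \<phi> where \<phi>: "bij_betw \<phi> X Y" using finite_same_card_bij[OF fX fY] cX Y(2) by auto
  define a' where "a' j x = a j (\<phi> x)" for j x
  have W: "(\<Sum>y\<in>X - {x}. \<Prod>j<n. Phi b N K z (a' j x) (a' j y)) \<le> 2 * T" if x: "x \<in> X" for x
  proof -
    have inj: "inj_on \<phi> (X - {x})" using \<phi> by (auto simp: bij_betw_def inj_on_def)
    have "(\<Sum>y\<in>X - {x}. \<Prod>j<n. Phi b N K z (a' j x) (a' j y)) = (\<Sum>y'\<in>\<phi> ` (X - {x}). \<Prod>j<n. Phi b N K z (a j (\<phi> x)) (a j y'))"
      unfolding a'_def by (simp add: sum.reindex[OF inj])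
    also have "\<dots> \<le> V a (\<phi> x)"
      unfolding V_def
    proof (rule sum_mono2)
      show "finite (X2 - {\<phi> x})" using fX2 by simp
      show "\<phi> ` (X - {x}) \<subseteq> X2 - {\<phi> x}"
        using \<phi> x Y(1) by (auto simp: bij_betw_def inj_on_def)
      show "0 \<le> (\<Prod>j<n. Phi b N K z (a j (\<phi> x)) (a j y))" for y using Phi0 by (intro prod_nonneg) auto
    qed
    also have "\<dots> \<le> 2 * T" using Y(3) \<phi> x by (auto simp: bij_betw_def)
    finally show ?thesis .
  qed
  have epsb: "exp (- \<tau> * real n * ln z') * (z' * (b + (1 - b) * real K / real N) + (1 - b) * (real N - real K) / real N) ^ n
         + exp (- \<tau> * real n * ln z) * (2 * T) \<le> \<epsilon>"
  proof -
    define \<gamma> where "\<gamma> = z' * (b + (1 - b) * real K / real N) + (1 - b) * (real N - real K) / real N"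
    have \<gamma>0: "0 < \<gamma>" unfolding \<gamma>_def using NK b z'
      by (intro add_pos_nonneg mult_pos_pos) (auto intro!: divide_nonneg_pos mult_nonneg_nonneg add_pos_nonneg)
    have t1: "exp (- \<tau> * real n * ln z') * \<gamma> ^ n = exp (real n * (ln \<gamma> - \<tau> * ln z'))"
      unfolding exp_pow_eq[OF \<gamma>0] by (simp add: exp_add[symmetric] algebra_simps)
    have "2 * T \<le> 4 * real M * \<beta> ^ n" unfolding T_def using \<beta>0 by (simp add: algebra_simps)
    also have "real M \<le> 2 * exp (real n * (R * ln 2))" unfolding M_def by (rule M_bound[OF R])
    finally have "2 * T \<le> 4 * (2 * exp (real n * (R * ln 2))) * \<beta> ^ n" using \<beta>0 by (simp add: mult_right_mono)
    then have "exp (- \<tau> * real n * ln z) * (2 * T) \<le> exp (- \<tau> * real n * ln z) * (4 * (2 * exp (real n * (R * ln 2))) * \<beta> ^ n)"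
      by (intro mult_left_mono) auto
    also have "\<dots> = 8 * exp (real n * (R * ln 2 + ln \<beta> - \<tau> * ln z))"
      unfolding exp_pow_eq[OF \<beta>0] by (simp add: exp_add[symmetric] algebra_simps)
    finally have t2: "exp (- \<tau> * real n * ln z) * (2 * T) \<le> 8 * exp (real n * (R * ln 2 + ln \<beta> - \<tau> * ln z))" .
    show ?thesis using t1 t2 eps unfolding \<gamma>_def[symmetric] \<beta>_def by linarith
  qed
  have "safe_protocol n (real n * R) b c \<epsilon> (cproto n N K a') (Dec n N K a' \<tau> (secret_set (real n * R)))"
    by (rule protocol_good[OF NK sf b n z' z _ epsb]) (use W in \<open>simp add: X_def\<close>)
  then show ?thesis by blast
qed


lemma achievable_pos:
  fixes b c R :: real
  assumes b: "0 < b" "b < c" "c < 1" and R0: "0 < R"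
    and RF: "R < (- b * log 2 (1 - c) + c * log 2 (1 - b)) / c"
  shows "safely_achievable b c R"
proof -
  have F: "(- b * log 2 (1 - c) + c * log 2 (1 - b)) / c = (ln (1 - b) - b * ln (1 - c) / c) / ln 2"
    unfolding log_def using b by (simp add: field_simps)
  have R': "R * ln 2 < ln (1 - b) - b * ln (1 - c) / c"
    using RF unfolding F by (simp add: less_divide_eq)
  obtain N K \<tau> where P: "0 < N" "0 < K" "K < N" "b * real N * (1 - c) \<le> c * (1 - b) * real K"
      "real K / real N < \<tau>" "\<tau> < b + (1 - b) * (real K / real N)" "\<tau> < 1"
      "R * ln 2 < Dv \<tau> (real K / real N)"
    using params_exist[OF b R'] by blast
  define q where "q = real K / real N"
  have q: "0 < q" "q < 1" using P by (auto simp: q_def)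
  define z where "z = \<tau> * (1 - q) / (q * (1 - \<tau>))"
  have z: "1 \<le> z" "R * ln 2 + ln (q * z + (1 - q)) - \<tau> * ln z < 0"
    using exp_rate_lemma[of q \<tau> R] q P unfolding z_def q_def by auto
  define p where "p = b + (1 - b) * q"
  have p: "0 < p" "p < 1" "\<tau> < p"
  proof -
    show "0 < p" using b q by (simp add: p_def add_pos_nonneg)
    have "(1 - b) * q < (1 - b) * 1" using b q by (intro mult_strict_left_mono) auto
    then show "p < 1" by (simp add: p_def)
    show "\<tau> < p" using P by (simp add: p_def q_def)
  qed
  obtain z' where z': "0 < z'" "z' < 1" "ln (z' * p + (1 - p)) - \<tau> * ln z' < 0"
    using small_rate_lemma[OF p] by blast
  have e1: "z' * (b + (1 - b) * real K / real N) + (1 - b) * (real N - real K) / real N = z' * p + (1 - p)"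
    using P unfolding p_def q_def by (simp add: field_simps)
  have e2: "(real K * z + real N - real K) / real N = q * z + (1 - q)"
    using P unfolding q_def by (simp add: field_simps)
  define \<rho>1 where "\<rho>1 = ln (z' * (b + (1 - b) * real K / real N) + (1 - b) * (real N - real K) / real N) - \<tau> * ln z'"
  define \<rho>2 where "\<rho>2 = R * ln 2 + ln ((real K * z + real N - real K) / real N) - \<tau> * ln z"
  have \<rho>: "\<rho>1 < 0" "\<rho>2 < 0" using z' z unfolding \<rho>1_def \<rho>2_def e1 e2 by auto
  show ?thesis
    unfolding safely_achievable_def
  proof (intro allI impI)
    fix \<epsilon> :: real and n0 :: nat
    assume \<epsilon>: "0 < \<epsilon>"
    have "\<forall>\<^sub>F n in sequentially. exp (real n * \<rho>1) < \<epsilon> / 2" by (rule ev_small) (use \<rho> \<epsilon> in auto)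
    moreover have "\<forall>\<^sub>F n in sequentially. exp (real n * \<rho>2) < \<epsilon> / 16" by (rule ev_small) (use \<rho> \<epsilon> in auto)
    ultimately have "\<forall>\<^sub>F n in sequentially. exp (real n * \<rho>1) < \<epsilon> / 2 \<and> exp (real n * \<rho>2) < \<epsilon> / 16"
      by eventually_elim auto
    then obtain N0 where N0: "\<And>n. n \<ge> N0 \<Longrightarrow> exp (real n * \<rho>1) < \<epsilon> / 2 \<and> exp (real n * \<rho>2) < \<epsilon> / 16"
      by (auto simp: eventually_sequentially)
    define n where "n = max (max n0 1) N0"
    have n: "n \<ge> n0" "0 < n" "n \<ge> N0" by (auto simp: n_def)
    have eps: "exp (real n * \<rho>1) + 8 * exp (real n * \<rho>2) \<le> \<epsilon>" using N0[OF n(3)] by simp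
    have "\<exists>P D. safe_protocol n (real n * R) b c \<epsilon> P D"
      by (rule construct[OF P(1,2) _ P(4) b n(2) R0 z'(1,2) z(1)]) (use P(3) eps in \<open>auto simp: \<rho>1_def \<rho>2_def\<close>)
    then show "\<exists>n\<ge>n0. \<exists>P D. safe_protocol n (real n * R) b c \<epsilon> P D" using n(1) by blast
  qed
qed

definition P0 :: protocol where
  "P0 = \<lparr> stops = (\<lambda>_. True), speaker = (\<lambda>_. 0), p_unk = (\<lambda>_. return_pmf 0),
     p_know = (\<lambda>_ _. return_pmf 0), plength = 0 \<rparr>"

lemma achievable_nonpos:
  fixes b c R :: real
  assumes b: "0 < b" "b < c" "c < 1" and R0: "R \<le> 0"
  shows "safely_achievable b c R"
  unfolding safely_achievable_def
proof (intro allI impI)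
  fix \<epsilon> :: real and n0 :: nat
  assume \<epsilon>: "0 < \<epsilon>"
  define n where "n = max n0 1"
  have n: "n \<ge> n0" "0 < n" by (auto simp: n_def)
  have tr: "transcript P0 x S = return_pmf []" for x S by (simp add: transcript_def P0_def)
  have fac: "pmf (transcript P0 x S) t = (if t = [] then 1 else 0) * (\<Prod>i<n. (\<lambda>i v. 1::real) i (i \<in> S))" for x S t
    by (simp add: tr indicator_def)
  have X: "secret_set (real n * R) = {1}"
  proof -
    have "real n * R \<le> 0" using R0 by (simp add: mult_nonneg_nonpos)
    then have "nat \<lceil>real n * R\<rceil> = 0" by simp
    then show ?thesis by (simp add: secret_set_def)
  qed
  have valid: "valid_protocol n P0" using n by (simp add: valid_protocol_def P0_def)
  have post: "posterior n b P0 x t i \<le> c" if "i < n" for x t i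
    using posterior_factor[OF fac that, of b] b by auto
  have Tp: "trans_prob n b P0 x [] = 1" for x
    using trans_prob_factor[OF fac, of b] by simp
  have cp: "cond_prob n b P0 x (\<lambda>t. (\<forall>i<n. posterior n b P0 x t i \<le> c) \<and> (\<lambda>_. 1) t = x) = 1" if "x = 1" for x
  proof -
    have "cond_prob n b P0 x (\<lambda>t. (\<forall>i<n. posterior n b P0 x t i \<le> c) \<and> (\<lambda>_. 1) t = x) =
      (\<Sum>t\<in>{t\<in>{[]}. (\<forall>i<n. posterior n b P0 x t i \<le> c) \<and> (\<lambda>_. 1) t = x}. trans_prob n b P0 x t)"
      by (rule cond_prob_sum) (auto simp: tr)
    also have "{t\<in>{[]}. (\<forall>i<n. posterior n b P0 x t i \<le> c) \<and> (\<lambda>_. 1) t = x} = {[]}"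
      using post that by auto
    finally show ?thesis using Tp by simp
  qed
  have "safe_protocol n (real n * R) b c \<epsilon> P0 (\<lambda>_. 1)"
    unfolding safe_protocol_def risky_protocol_def X using valid post cp \<epsilon> by auto
  then show "\<exists>n\<ge>n0. \<exists>P D. safe_protocol n (real n * R) b c \<epsilon> P D" using n by blast
qed


theorem corollary4p3:
  fixes b c :: real
  assumes "0 < b" and "b < c" and "c < 1"
  shows "{R. safely_achievable b c R} \<noteq> {} \<and> bdd_above {R. safely_achievable b c R} \<and>
         safe_capacity b c = (- b * log 2 (1 - c) + c * log 2 (1 - b)) / c"
proof -
  define F where "F = (- b * log 2 (1 - c) + c * log 2 (1 - b)) / c"
  have b: "0 < b" "b < c" "c < 1" by fact+
  have ub: "R \<le> F" if "R \<in> {R. safely_achievable b c R}" for R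
    using achievable_le_F[OF b] that unfolding F_def by simp
  have mem: "R \<in> {R. safely_achievable b c R}" if "R < F" for R
  proof (cases "R \<le> 0")
    case True then show ?thesis using achievable_nonpos[OF b] by simp
  next
    case False then show ?thesis using achievable_pos[OF b] that unfolding F_def by simp
  qed
  have ne: "{R. safely_achievable b c R} \<noteq> {}" using achievable_nonpos[OF b, of 0] by auto
  have bdd: "bdd_above {R. safely_achievable b c R}" using ub by (intro bdd_aboveI) 
  have "Sup {R. safely_achievable b c R} = F"
  proof (rule cSup_eq_non_empty[OF ne])
    show "\<And>x. x \<in> {R. safely_achievable b c R} \<Longrightarrow> x \<le> F" by (rule ub)
    fix y assume y: "\<And>x. x \<in> {R. safely_achievable b c R} \<Longrightarrow> x \<le> y"
    show "F \<le> y"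
    proof (rule ccontr)
      assume "\<not> F \<le> y"
      then have "(y + F) / 2 < F" "y < (y + F) / 2" by auto
      then show False using y[OF mem[of "(y + F) / 2"]] by simp
    qed
  qed
  then show ?thesis using ne bdd unfolding safe_capacity_def F_def by simp
qed


end
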